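(* Let $n\ge1$ and $\pi\in\mathfrak S_n$. For every tree $T_\sigma\in\mathrm{Orb}(T_\pi)$ (with $\sigma\in\mathfrak S_n$) one has $\mathrm{as}(\sigma)\ge \mathrm{leaf}(T_\pi)$, and there is exactly one tree $T_{\sigma}\in\mathrm{Orb}(T_\pi)$ with $\mathrm{as}(\sigma)=\mathrm{leaf}(T_\pi)$.
   Context: All trees are rooted binary trees in which each child of a node is designated as a left or a right child. For a finite totally ordered set $Y$, a min–max tree on $Y$ is such a tree whose nodes are labeled bijectively by $Y$ so that the label of each node is either the minimum or the maximum of the labels in its subtree. A node with at least one child is inner; an inner node is a min-node (resp. max-node) if its label is the minimum (resp. maximum) of the labels of its subtree. An HR-tree is a min–max tree in which every inner node $s$ has a nonempty right subtree containing the maximum label of the subtree of $s$ if $s$ is a min-node, and the minimum label of that subtree if $s$ is a max-node. The reading word $w(T)$ is the in-order reading $w(T)=w(L)\,\ell\,w(R)$ ($\ell$ the root label, $L,R$ the left and right subtrees). The map $T\mapsto w(T)$ is a bijection from HR-trees labeled by $[n]$ onto $\mathfrak S_n$; $T_\pi$ denotes the HR-tree with $w(T_\pi)=\pi$. $\mathrm{leaf}(T)$ is the number of leaves of $T$. HR-action: for $i\in[n]$ and an HR-tree $T_\pi$, let $v$ be the node labeled $\pi_i$. If $v$ is a leaf, $\psi_i(T_\pi)=T_\pi$. Otherwise let $R$ be the set consisting of $\pi_i$ and the labels of the right subtree of $v$; relabel the nodes of $v$ and its right subtree, keeping the shape, so that $v$ receives $\max R$ if $v$ is a min-node and $\min R$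 if $v$ is a max-node, and the nodes of the right subtree receive the remaining elements of $R$ by the order-preserving bijection from their old labels; all other labels are unchanged. The $\psi_i$ are pairwise commuting involutions on the set of HR-trees labeled by $[n]$, and $\mathrm{Orb}(T)$ denotes the set of all trees obtained from $T$ by compositions of the $\psi_i$. For $\pi\in\mathfrak S_n$, an alternating subsequence is a subsequence $\pi_{i_1}\pi_{i_2}\cdots\pi_{i_k}$ ($i_1<\dots<i_k$) with $\pi_{i_1}>\pi_{i_2}<\pi_{i_3}>\cdots$ (a single letter counts, with $k=1$); $\mathrm{as}(\pi)$ is the maximal length of an alternating subsequence. *)

theory Defs
  imports Main "HOL-Library.Tree" "HOL-Library.Sublist"
begin

(* Binary trees: HOL-Library Tree, where Leaf is the EMPTY tree and
   Node l a r is a node labelled a with left subtree l and right subtree r.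
   The reading word w(T) is inorder T. *)

fun hr_cond :: "nat tree \<Rightarrow> bool" where
  "hr_cond Leaf = True"
| "hr_cond (Node l a r) =
     (hr_cond l \<and> hr_cond r \<and>
      (let S = set_tree (Node l a r) in
        (l = Leaf \<and> r = Leaf) \<or>
        (r \<noteq> Leaf \<and>
          ((a = Min S \<and> Max S \<in> set_tree r) \<or> (a = Max S \<and> Min S \<in> set_tree r)))))"

definition hr_tree :: "nat \<Rightarrow> nat tree \<Rightarrow> bool" where
  "hr_tree n t \<longleftrightarrow> hr_cond t \<and> distinct (inorder t) \<and> set_tree t = {1..n}"

definition is_perm :: "nat \<Rightarrow> nat list \<Rightarrow> bool" where
  "is_perm n p \<longleftrightarrow> distinct p \<and> set p = {1..n}"

fun nleaf :: "'a tree \<Rightarrow> nat" where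
  "nleaf Leaf = 0"
| "nleaf (Node l a r) = (if l = Leaf \<and> r = Leaf then 1 else nleaf l + nleaf r)"

(* order-preserving bijection from finite A onto finite B (card A = card B) *)
definition relabel :: "nat set \<Rightarrow> nat set \<Rightarrow> nat \<Rightarrow> nat" where
  "relabel A B x = sorted_list_of_set B ! card {y \<in> A. y < x}"

fun root_move :: "nat tree \<Rightarrow> nat tree" where
  "root_move Leaf = Leaf"
| "root_move (Node l a r) =
     (if l = Leaf \<and> r = Leaf then Node l a r
      else (let R = insert a (set_tree r);
                b = (if a = Min (set_tree (Node l a r)) then Max R else Min R)
            in Node l b (map_tree (relabel (set_tree r) (R - {b})) r)))"

(* psi at in-order position i (0-based; psi_{i+1} of the paper) *)
fun psi :: "nat \<Rightarrow> nat tree \<Rightarrow> nat tree" where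
  "psi i Leaf = Leaf"
| "psi i (Node l a r) =
     (if i < size l then Node (psi i l) a r
      else if i = size l then root_move (Node l a r)
      else Node l a (psi (i - size l - 1) r))"

inductive_set orb :: "nat tree \<Rightarrow> nat tree set" for T where
  orb_refl: "T \<in> orb T"
| orb_step: "t \<in> orb T \<Longrightarrow> i < size T \<Longrightarrow> psi i t \<in> orb T"

definition alternating :: "nat list \<Rightarrow> bool" where
  "alternating xs \<longleftrightarrow>
     (\<forall>j. Suc j < length xs \<longrightarrow>
        (if even j then xs ! j > xs ! Suc j else xs ! j < xs ! Suc j))"

definition as_len :: "nat list \<Rightarrow> nat" where
  "as_len p = Max {length xs | xs. subseq xs p \<and> xs \<noteq> [] \<and> alternating xs}"

end

theory Submission
  imports Defs
begin

lemma subseq_set: "subseq xs ys \<Longrightarrow> set xs \<subseteq> set ys"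
  by (induction xs ys rule: list_emb.induct) auto

lemma subseq_dist: "subseq xs ys \<Longrightarrow> distinct ys \<Longrightarrow> distinct xs"
  using subseqs_distinctD in_set_subseqs by blast

fun turns :: "nat list \<Rightarrow> nat" where
  "turns (a # b # c # r) = (if (a < b) = (b < c) then 0 else 1) + turns (b # c # r)"
| "turns _ = 0"

fun zz :: "nat list \<Rightarrow> bool" where
  "zz (a # b # c # r) = ((a < b) \<noteq> (b < c) \<and> zz (b # c # r))"
| "zz _ = True"

definition altb :: "bool \<Rightarrow> nat list \<Rightarrow> bool" where
  "altb b xs \<longleftrightarrow> (\<forall>j. Suc j < length xs \<longrightarrow>
        (if even j = b then xs ! j > xs ! Suc j else xs ! j < xs ! Suc j))"

lemma altb_Cons2: "altb b (x # y # r) \<longleftrightarrow> (if b then x > y else x < y) \<and> altb (\<not> b) (y # r)"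
proof
  assume h: "altb b (x # y # r)"
  have "(if b then x > y else x < y)" using h[unfolded altb_def, rule_format, of 0] by auto
  moreover have "altb (\<not> b) (y # r)" unfolding altb_def
  proof (intro allI impI)
    fix j assume "Suc j < length (y # r)"
    then show "if even j = (\<not> b) then (y # r) ! j > (y # r) ! Suc j else (y # r) ! j < (y # r) ! Suc j"
      using h[unfolded altb_def, rule_format, of "Suc j"] by auto
  qed
  ultimately show "(if b then x > y else x < y) \<and> altb (\<not> b) (y # r)" by blast
next
  assume h: "(if b then x > y else x < y) \<and> altb (\<not> b) (y # r)"
  show "altb b (x # y # r)" unfolding altb_def
  proof (intro allI impI)
    fix j assume j: "Suc j < length (x # y # r)"
    show "if even j = b then (x # y # r) ! j > (x # y # r) ! Suc j else (x # y # r) ! j < (x # y # r) ! Suc j"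
    proof (cases j)
      case 0 then show ?thesis using h by auto
    next
      case (Suc k) then show ?thesis using h[THEN conjunct2, unfolded altb_def, rule_format, of k] j by auto
    qed
  qed
qed

lemma altb_short: "length xs \<le> 1 \<Longrightarrow> altb b xs"
  unfolding altb_def by auto

lemma alternating_altb: "alternating xs = altb True xs"
  unfolding alternating_def altb_def by auto

lemma zz_altb: "distinct (p # ys) \<Longrightarrow> ys \<noteq> [] \<Longrightarrow> zz (p # ys) \<Longrightarrow> b = (p < hd ys) \<Longrightarrow> altb b ys"
proof (induction ys arbitrary: p b)
  case Nil then show ?case by simp
next
  case (Cons y ys)
  note IH = Cons.IH and pr = Cons.prems
  show ?case
  proof (cases ys)
    case Nil then show ?thesis by (simp add: altb_short)
  next
    case (Cons z r)
    have d: "distinct (y # ys)" using pr(1) by simp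
    have zy: "zz (y # ys)" using pr(3) Cons by simp
    have yz: "(y < z) = (\<not> b)" using pr(3) pr(4) Cons by simp
    have a1: "altb (\<not> b) ys" using IH[OF d _ zy] Cons yz by simp
    have yne: "y \<noteq> z" using d Cons by simp
    have "(if b then y > z else y < z)" using yz yne by (cases b) auto
    then show ?thesis using a1 Cons by (simp add: altb_Cons2)
  qed
qed

lemma altb_zz: "ys \<noteq> [] \<Longrightarrow> altb b ys \<Longrightarrow> b = (p < hd ys) \<Longrightarrow> zz (p # ys)"
proof (induction ys arbitrary: p b)
  case Nil then show ?case by simp
next
  case (Cons y ys)
  note IH = Cons.IH and pr = Cons.prems
  show ?case
  proof (cases ys)
    case Nil then show ?thesis by simp
  next
    case (Cons z r)
    have a: "(if b then y > z else y < z)" "altb (\<not> b) ys" using pr(2) Cons by (simp_all add: altb_Cons2)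
    have "(y < z) = (\<not> b)" using a(1) by (cases b) auto
    then have zy: "zz (y # ys)" using IH[OF _ a(2)] Cons by simp
    have "(p < y) \<noteq> (y < z)" using pr(3) a(1) \<open>(y < z) = (\<not> b)\<close> by simp
    then show ?thesis using zy Cons by simp
  qed
qed

lemma zz_turns: "zz (p # ys) \<Longrightarrow> ys \<noteq> [] \<Longrightarrow> turns (p # ys) + 1 = length ys"
proof (induction ys arbitrary: p)
  case Nil then show ?case by simp
next
  case (Cons y ys)
  note IH = Cons.IH and pr = Cons.prems
  show ?case
  proof (cases ys)
    case Nil then show ?thesis by simp
  next
    case (Cons z r)
    have zy: "zz (y # ys)" using pr(1) Cons by simp
    have t: "turns (y # ys) + 1 = length ys" using IH[OF zy] Cons by simp
    have "turns (p # y # ys) = 1 + turns (y # ys)" using pr(1) Cons by simp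
    then show ?thesis using t by simp
  qed
qed

lemma lower_seq:
  "distinct (p # x) \<Longrightarrow> x \<noteq> [] \<Longrightarrow>
   \<exists>ys. subseq ys x \<and> length ys = turns (p # x) + 1 \<and> zz (p # ys) \<and> ys \<noteq> [] \<and> (p < hd ys \<longleftrightarrow> p < hd x)"
proof (induction x arbitrary: p)
  case Nil then show ?case by simp
next
  case (Cons a x)
  show ?case
  proof (cases x)
    case Nil
    then show ?thesis by (intro exI[of _ "[a]"]) auto
  next
    case (Cons b r)
    obtain ys where ys: "subseq ys x" "length ys = turns (a # x) + 1" "zz (a # ys)" "ys \<noteq> []"
      "(a < hd ys \<longleftrightarrow> a < hd x)"
      using Cons.IH[of a] Cons.prems Cons by auto
    obtain h rest where hr: "ys = h # rest" using ys(4) by (cases ys) auto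
    have hin: "h \<in> set x" using ys(1) hr using subseq_set by fastforce
    show ?thesis
    proof (cases "(p < a) = (a < b)")
      case False
      show ?thesis
        apply (intro exI[of _ "a # ys"])
        using ys False Cons hr by auto
    next
      case True
      have pa: "p \<noteq> a" "p \<noteq> h" "a \<noteq> h" using Cons.prems hin by auto
      have ph: "(p < h) = (a < h)" using True ys(5) pa Cons hr by auto
      have z: "zz (p # ys)" using ys(3) ph hr by (cases rest) auto
      have s1: "subseq ys (a # x)" using ys(1) by (rule list_emb_Cons)
      have l1: "length ys = turns (p # a # x) + 1" using ys(2) True Cons by simp
      have h1: "(p < hd ys) = (p < hd (a # x))" using ph ys(5) True hr Cons by simp
      show ?thesis using z s1 l1 h1 ys(4) by blast
    qed
  qed
qed

lemma turns_Cons2: "turns (a # b # l) = (if l = [] then 0 else if (a < b) = (b < hd l) then 0 else 1) + turns (b # l)"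
  by (cases l) auto

lemma turns_swap_head: "ys \<noteq> [] \<Longrightarrow> turns (x # ys) \<le> (if (x < hd ys) = (y < hd ys) then 0 else 1) + turns (y # ys)"
  by (cases ys rule: turns.cases) (auto simp: turns_Cons2 split: if_splits)

lemma turns_mono_aux:
  "subseq ys xs \<Longrightarrow> ys \<noteq> [] \<Longrightarrow>
    turns (x # ys) + (if (x < hd ys) = (x < hd xs) then 0 else 1) \<le> turns (x # xs)"
proof (induction ys xs arbitrary: x rule: list_emb.induct)
  case (list_emb_Nil ys) then show ?case by simp
next
  case (list_emb_Cons ys xs y)
  have xs: "xs \<noteq> []" using list_emb_Cons by auto
  have IH: "turns (y # ys) + (if (y < hd ys) = (y < hd xs) then 0 else 1) \<le> turns (y # xs)"
    using list_emb_Cons by auto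
  have sw: "turns (x # ys) \<le> (if (x < hd ys) = (y < hd ys) then 0 else 1) + turns (y # ys)"
    using turns_swap_head list_emb_Cons by auto
  have eq: "turns (x # y # xs) = (if (x < y) = (y < hd xs) then 0 else 1) + turns (y # xs)"
    using xs by (simp add: turns_Cons2)
  show ?case using IH sw eq
    by (auto split: if_splits)
next
  case (list_emb_Cons2 y y' ys xs)
  then have yy: "y = y'" by simp
  show ?case
  proof (cases "ys = []")
    case True then show ?thesis using yy by (simp add: turns_Cons2)
  next
    case False
    then have xs: "xs \<noteq> []" using list_emb_Cons2 by auto
    have IH: "turns (y # ys) + (if (y < hd ys) = (y < hd xs) then 0 else 1) \<le> turns (y # xs)"
      using list_emb_Cons2 False yy by auto
    show ?thesis using IH False xs yy by (auto simp: turns_Cons2 split: if_splits)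
  qed
qed

lemma turns_mono: "subseq ys xs \<Longrightarrow> ys \<noteq> [] \<Longrightarrow> turns (x # ys) \<le> turns (x # xs)"
proof -
  assume a: "subseq ys xs" "ys \<noteq> []"
  show ?thesis using turns_mono_aux[OF a, of x] by linarith
qed

lemma as_len_turns:
  assumes "distinct w" "w \<noteq> []" "0 \<notin> set w"
  shows "as_len w = turns (0 # w) + 1"
proof -
  let ?M = "{length xs | xs. subseq xs w \<and> xs \<noteq> [] \<and> alternating xs}"
  have fin: "finite ?M"
    by (rule finite_subset[of _ "{..length w}"]) (auto dest: list_emb_length)
  have up: "k \<le> turns (0 # w) + 1" if kM: "k \<in> ?M" for k
  proof -
    obtain xs where xs: "k = length xs" "subseq xs w" "xs \<noteq> []" "alternating xs" using kM by blast
    have "hd xs \<in> set w" using subseq_set[OF xs(2)] xs(3) hd_in_set by blast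
    then have "hd xs \<noteq> 0" using assms(3) by metis
    then have "0 < hd xs" by simp
    then have "zz (0 # xs)" using altb_zz[of xs True 0] xs by (simp add: alternating_altb)
    then have "turns (0 # xs) + 1 = length xs" using zz_turns xs by auto
    moreover have "turns (0 # xs) \<le> turns (0 # w)" using turns_mono xs by auto
    ultimately show ?thesis using xs by auto
  qed
  obtain ys where ys: "subseq ys w" "length ys = turns (0 # w) + 1" "zz (0 # ys)" "ys \<noteq> []"
      "(0 < hd ys \<longleftrightarrow> 0 < hd w)"
    using lower_seq[of 0 w] assms by auto
  have "distinct (0 # ys)" using ys(1) assms using subseq_set subseq_dist by fastforce
  moreover have "hd ys \<in> set w" using subseq_set[OF ys(1)] ys(4) hd_in_set by blast
  then have "hd ys \<noteq> 0" using assms(3) by metis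
    then have "0 < hd ys" by simp
  ultimately have "altb True ys" using zz_altb[of 0 ys True] ys by simp
  then have "alternating ys" by (simp add: alternating_altb)
  then have "turns (0 # w) + 1 \<in> ?M" using ys(1,2,4) by force
  then show ?thesis unfolding as_len_def using Max_eqI[OF fin up] by blast
qed

definition smono :: "nat set \<Rightarrow> (nat \<Rightarrow> nat) \<Rightarrow> bool" where
  "smono A f \<longleftrightarrow> (\<forall>x\<in>A. \<forall>y\<in>A. x < y \<longrightarrow> f x < f y)"

lemma smono_inj: "smono A f \<Longrightarrow> inj_on f A"
  unfolding smono_def inj_on_def
proof (intro ballI impI)
  fix x y assume h: "\<forall>x\<in>A. \<forall>y\<in>A. x < y \<longrightarrow> f x < f y" "x \<in> A" "y \<in> A" "f x = f y"
  show "x = y"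
  proof (rule ccontr)
    assume "x \<noteq> y"
    then have "x < y \<or> y < x" by arith
    then show False using h by force
  qed
qed

lemma smono_less_iff: "smono A f \<Longrightarrow> x \<in> A \<Longrightarrow> y \<in> A \<Longrightarrow> f x < f y \<longleftrightarrow> x < y"
proof -
  assume h: "smono A f" "x \<in> A" "y \<in> A"
  have "x < y \<or> x = y \<or> y < x" by arith
  then show ?thesis using h unfolding smono_def by force
qed

lemma smono_subset: "smono A f \<Longrightarrow> B \<subseteq> A \<Longrightarrow> smono B f"
  unfolding smono_def by blast

lemma rank_nth:
  assumes "finite A" "x \<in> A"
  shows "sorted_list_of_set A ! card {y\<in>A. y < x} = x"
proof -
  define xs where "xs = sorted_list_of_set A"
  have s: "sorted_wrt (<) xs" unfolding xs_def by (rule strict_sorted_list_of_set)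
  have st: "set xs = A" unfolding xs_def using assms by simp
  have d: "distinct xs" unfolding xs_def by simp
  have "x \<in> set xs" using st assms by simp
  then obtain i where i: "i < length xs" "xs ! i = x" unfolding in_set_conv_nth by blast
  have "{y\<in>A. y < x} = (\<lambda>j. xs ! j) ` {..<i}"
  proof
    show "{y \<in> A. y < x} \<subseteq> (!) xs ` {..<i}"
    proof
      fix y assume y: "y \<in> {y \<in> A. y < x}"
      then have "y \<in> set xs" using st by simp
      then obtain j where j: "j < length xs" "xs ! j = y" unfolding in_set_conv_nth by blast
      have "j < i"
      proof (rule ccontr)
        assume "\<not> j < i"
        then have "i \<le> j" by simp
        have "xs ! i \<le> xs ! j"
        proof (cases "i = j")
          case True then show ?thesis by simp
        next
          case False
          then have "i < j" using \<open>i \<le> j\<close> by simp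
          from sorted_wrt_nth_less[OF s this j(1)] show ?thesis by simp
        qed
        then show False using y i j by auto
      qed
      then show "y \<in> (!) xs ` {..<i}" using j by auto
    qed
  next
    show "(!) xs ` {..<i} \<subseteq> {y \<in> A. y < x}"
    proof
      fix y assume "y \<in> (!) xs ` {..<i}"
      then obtain j where j: "j < i" "y = xs ! j" by auto
      have "xs ! j < xs ! i" using sorted_wrt_nth_less[OF s j(1) i(1)] .
      moreover have "xs ! j \<in> set xs" using j(1) i(1) by simp
      ultimately show "y \<in> {y \<in> A. y < x}" using j i st by simp
    qed
  qed
  moreover have "inj_on (\<lambda>j. xs ! j) {..<i}"
  proof (rule inj_onI)
    fix j k assume "j \<in> {..<i}" "k \<in> {..<i}" "xs ! j = xs ! k"
    then show "j = k" using nth_eq_iff_index_eq[OF d, of j k] i(1) by simp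
  qed
  ultimately have "card {y\<in>A. y < x} = i" by (simp add: card_image)
  then show ?thesis using i unfolding xs_def by simp
qed

lemma card_less_smono:
  assumes "finite A" "smono A f" "x \<in> A"
  shows "card {y\<in>f ` A. y < f x} = card {y\<in>A. y < x}"
proof -
  have "{y\<in>f ` A. y < f x} = f ` {y\<in>A. y < x}"
    using assms smono_less_iff[OF assms(2)] by auto
  moreover have "inj_on f {y\<in>A. y < x}" using smono_inj[OF assms(2)] by (auto simp: inj_on_def)
  ultimately show ?thesis by (simp add: card_image)
qed

lemma relabel_unique:
  assumes "finite A" "smono A g" "g ` A = B" "x \<in> A"
  shows "relabel A B x = g x"
proof -
  have "relabel A B x = sorted_list_of_set B ! card {y\<in>g ` A. y < g x}"
    unfolding relabel_def using card_less_smono[OF assms(1,2,4)] by simp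
  also have "\<dots> = g x" using rank_nth[of B "g x"] assms by auto
  finally show ?thesis .
qed

lemma relabel_props:
  assumes "finite A" "finite B" "card A = card B"
  shows "smono A (relabel A B)" "relabel A B ` A = B"
proof -
  define xs where "xs = sorted_list_of_set B"
  have s: "sorted_wrt (<) xs" unfolding xs_def by (rule strict_sorted_list_of_set)
  have len: "length xs = card B" unfolding xs_def by simp
  have st: "set xs = B" unfolding xs_def using assms(2) by simp
  have rl: "relabel A B x = xs ! card {y\<in>A. y < x}" for x unfolding relabel_def xs_def by simp
  have lt: "card {y\<in>A. y < x} < length xs" if "x \<in> A" for x
  proof -
    have "card {y\<in>A. y < x} < card A"
      using assms(1) that by (intro psubset_card_mono) auto
    then show ?thesis using len assms(3) by simp
  qed
  show sm: "smono A (relabel A B)" unfolding smono_def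
  proof (intro ballI impI)
    fix x y assume xy: "x \<in> A" "y \<in> A" "x < y"
    have "card {z\<in>A. z < x} < card {z\<in>A. z < y}"
      using assms(1) xy by (intro psubset_card_mono) auto
    from sorted_wrt_nth_less[OF s this lt[OF xy(2)]]
    show "relabel A B x < relabel A B y" unfolding rl .
  qed
  have sub: "relabel A B ` A \<subseteq> B"
  proof
    fix z assume "z \<in> relabel A B ` A"
    then obtain x where x: "x \<in> A" "z = relabel A B x" by blast
    have "xs ! card {y\<in>A. y < x} \<in> set xs" using lt[OF x(1)] by (rule nth_mem)
    then show "z \<in> B" using x st rl by simp
  qed
  have "card (relabel A B ` A) = card B" using smono_inj[OF sm] assms by (simp add: card_image)
  then show "relabel A B ` A = B" using sub assms(2) by (simp add: card_subset_eq)
qed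

lemma smono_comp: "smono A f \<Longrightarrow> smono B g \<Longrightarrow> f ` A \<subseteq> B \<Longrightarrow> smono A (g \<circ> f)"
  unfolding smono_def comp_def by (auto simp: image_subset_iff)

lemma relabel_inv:
  assumes "finite A" "finite B" "card A = card B" "x \<in> A"
  shows "relabel B A (relabel A B x) = x"
proof -
  have p1: "smono A (relabel A B)" "relabel A B ` A = B" using relabel_props assms by auto
  have p2: "smono B (relabel B A)" "relabel B A ` B = A" using relabel_props assms by auto
  have "smono A (relabel B A \<circ> relabel A B)" using smono_comp p1 p2 by auto
  moreover have "(relabel B A \<circ> relabel A B) ` A = relabel B A ` (relabel A B ` A)" by (simp add: image_comp)
  then have "(relabel B A \<circ> relabel A B) ` A = A" using p1 p2 by simp
  ultimately have "relabel A A x = (relabel B A \<circ> relabel A B) x"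
    using relabel_unique assms by blast
  moreover have "relabel A A x = x" using relabel_unique[of A "\<lambda>x. x" A x] assms by (auto simp: smono_def)
  ultimately show ?thesis by simp
qed

lemma relabel_map:
  assumes "finite A" "finite B" "card A = card B" "x \<in> A" "smono (A \<union> B) f"
  shows "relabel (f ` A) (f ` B) (f x) = f (relabel A B x)"
proof -
  have p1: "smono A (relabel A B)" "relabel A B ` A = B" using relabel_props assms by auto
  have injA: "inj_on f A" using smono_inj smono_subset assms(5) by blast
  let ?g = "f \<circ> relabel A B \<circ> inv_into A f"
  have gi: "?g (f y) = f (relabel A B y)" if "y \<in> A" for y using injA that by simp
  have "smono (f ` A) ?g" unfolding smono_def
  proof (intro ballI impI)
    fix u v assume uv: "u \<in> f ` A" "v \<in> f ` A" "u < v"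
    then obtain y z where yz: "y \<in> A" "z \<in> A" "u = f y" "v = f z" by auto
    have "y < z" using uv yz smono_less_iff[OF assms(5)] by auto
    then have "relabel A B y < relabel A B z" using p1 yz unfolding smono_def by auto
    moreover have "relabel A B y \<in> B" "relabel A B z \<in> B" using p1 yz by auto
    ultimately have "f (relabel A B y) < f (relabel A B z)" using assms(5) unfolding smono_def by auto
    then show "?g u < ?g v" using gi yz by simp
  qed
  moreover have "?g ` (f ` A) = f ` B"
  proof -
    have "?g ` (f ` A) = (\<lambda>y. f (relabel A B y)) ` A" using gi by (auto simp: image_iff)
    also have "\<dots> = f ` (relabel A B ` A)" by (simp add: image_image)
    also have "\<dots> = f ` B" using p1 by simp
    finally show ?thesis .
  qed
  moreover have "finite (f ` A)" using assms by simp
  ultimately have "relabel (f ` A) (f ` B) (f x) = ?g (f x)"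
    using relabel_unique assms(4) by blast
  then show ?thesis using gi assms by simp
qed

definition hrd :: "nat tree \<Rightarrow> bool" where
  "hrd t \<longleftrightarrow> hr_cond t \<and> distinct (inorder t)"

definition Dw :: "nat list \<Rightarrow> bool" where
  "Dw w = (case w of a # b # _ \<Rightarrow> b < a | _ \<Rightarrow> False)"

definition Ew :: "nat list \<Rightarrow> bool" where
  "Ew w = (case rev w of z # y # _ \<Rightarrow> y < z | _ \<Rightarrow> False)"

lemma map_tree_Leaf_iff[simp]: "(map_tree f t = Leaf) = (t = Leaf)"
  by (cases t) auto

lemma smono_Min: assumes "finite S" "S \<noteq> {}" "smono S f" shows "Min (f ` S) = f (Min S)"
proof (rule Min_eqI)
  show "finite (f ` S)" using assms by simp
  show "f (Min S) \<in> f ` S" using assms by simp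
  fix y assume "y \<in> f ` S"
  then obtain z where z: "z \<in> S" "y = f z" by blast
  have "Min S \<le> z" using z assms by simp
  show "f (Min S) \<le> y"
  proof (cases "Min S = z")
    case True then show ?thesis using z by simp
  next
    case False
    then have "Min S < z" using \<open>Min S \<le> z\<close> by simp
    then have "f (Min S) < f z" using z(1) assms(3) Min_in[OF assms(1,2)] unfolding smono_def by blast
    then show ?thesis using z by simp
  qed
qed

lemma smono_Max: assumes "finite S" "S \<noteq> {}" "smono S f" shows "Max (f ` S) = f (Max S)"
proof (rule Max_eqI)
  show "finite (f ` S)" using assms by simp
  show "f (Max S) \<in> f ` S" using assms by simp
  fix y assume "y \<in> f ` S"
  then obtain z where z: "z \<in> S" "y = f z" by blast
  have "z \<le> Max S" using z assms by simp
  show "y \<le> f (Max S)"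
  proof (cases "Max S = z")
    case True then show ?thesis using z by simp
  next
    case False
    then have "z < Max S" using \<open>z \<le> Max S\<close> by simp
    then have "f z < f (Max S)" using z(1) assms(3) Max_in[OF assms(1,2)] unfolding smono_def by blast
    then show ?thesis using z by simp
  qed
qed

lemma hr_cond_Node:
  "hr_cond (Node l a r) \<longleftrightarrow> hr_cond l \<and> hr_cond r \<and>
     ((l = Leaf \<and> r = Leaf) \<or>
      (r \<noteq> Leaf \<and> ((a = Min (set_tree (Node l a r)) \<and> Max (set_tree (Node l a r)) \<in> set_tree r) \<or>
                     (a = Max (set_tree (Node l a r)) \<and> Min (set_tree (Node l a r)) \<in> set_tree r))))"
  by (simp only: hr_cond.simps Let_def)

lemma map_hr: "smono (set_tree t) f \<Longrightarrow> hr_cond t \<Longrightarrow> hr_cond (map_tree f t)"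
proof (induction t)
  case Leaf then show ?case by simp
next
  case (Node l a r)
  define S where "S = set_tree (Node l a r)"
  have sl: "smono (set_tree l) f" "smono (set_tree r) f" using Node.prems(1) smono_subset by auto
  have h: "hr_cond l" "hr_cond r"
    "(l = Leaf \<and> r = Leaf) \<or> (r \<noteq> Leaf \<and> ((a = Min S \<and> Max S \<in> set_tree r) \<or> (a = Max S \<and> Min S \<in> set_tree r)))"
    using Node.prems(2) unfolding hr_cond_Node S_def by blast+
  have ih: "hr_cond (map_tree f l)" "hr_cond (map_tree f r)" using Node.IH sl h by auto
  have fin: "finite S" "S \<noteq> {}" unfolding S_def by auto
  have sm: "smono S f" using Node.prems(1) unfolding S_def .
  have st: "set_tree (map_tree f (Node l a r)) = f ` S" unfolding S_def by (simp add: tree.set_map image_Un)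
  have mn: "Min (f ` S) = f (Min S)" "Max (f ` S) = f (Max S)" using smono_Min smono_Max fin sm by auto
  have "(map_tree f l = Leaf \<and> map_tree f r = Leaf) \<or>
      (map_tree f r \<noteq> Leaf \<and> ((f a = Min (f ` S) \<and> Max (f ` S) \<in> set_tree (map_tree f r)) \<or>
          (f a = Max (f ` S) \<and> Min (f ` S) \<in> set_tree (map_tree f r))))"
    using h(3) mn by (auto simp: tree.set_map)
  then show ?case unfolding hr_cond_Node using ih st by simp
qed

lemma map_tree_cong_set: "(\<And>x. x \<in> set_tree t \<Longrightarrow> g1 x = g2 x) \<Longrightarrow> map_tree g1 t = map_tree g2 t"
  by (induction t) auto

lemma map_tree_id_on: "(\<And>x. x \<in> set_tree t \<Longrightarrow> g x = x) \<Longrightarrow> map_tree g t = t"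
  by (induction t) auto

lemma nleaf_map[simp]: "nleaf (map_tree f t) = nleaf t"
  by (induction t) auto

lemma nleaf_pos: "t \<noteq> Leaf \<Longrightarrow> nleaf t \<ge> 1"
  by (induction t) auto

lemma turns_map: "smono (set w) f \<Longrightarrow> turns (map f w) = turns w"
proof (induction w rule: turns.induct)
  case (1 a b c r)
  have "set (b # c # r) \<subseteq> set (a # b # c # r)" by auto
  then have s: "smono (set (b # c # r)) f" using 1(2) smono_subset by blast
  have e1: "(f a < f b) = (a < b)" "(f b < f c) = (b < c)" using smono_less_iff[OF 1(2)] by auto
  show ?case using 1(1)[OF s] e1 by simp
qed auto

lemma Dw_map: "smono (set w) f \<Longrightarrow> Dw (map f w) = Dw w"
proof -
  assume s: "smono (set w) f"
  show ?thesis
  proof (cases w)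
    case Nil then show ?thesis by (simp add: Dw_def)
  next
    case (Cons a v)
    show ?thesis
    proof (cases v)
      case Nil then show ?thesis using Cons by (simp add: Dw_def)
    next
      case (Cons b r)
      have "b \<in> set w" "a \<in> set w" using Cons \<open>w = a # v\<close> by auto
      then show ?thesis unfolding Dw_def using smono_less_iff[OF s, of b a] Cons \<open>w = a # v\<close> by simp
    qed
  qed
qed

lemma Ew_map: "smono (set w) f \<Longrightarrow> Ew (map f w) = Ew w"
proof -
  assume s: "smono (set w) f"
  have rm: "rev (map f w) = map f (rev w)" by (simp add: rev_map)
  show ?thesis
  proof (cases "rev w")
    case Nil then show ?thesis unfolding Ew_def rm by simp
  next
    case (Cons z v)
    show ?thesis
    proof (cases v)
      case Nil then show ?thesis unfolding Ew_def rm using Cons by simp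
    next
      case (Cons y r)
      have "z \<in> set (rev w)" "y \<in> set (rev w)" using Cons \<open>rev w = z # v\<close> by auto
      then have "z \<in> set w" "y \<in> set w" by simp_all
      then show ?thesis unfolding Ew_def rm using smono_less_iff[OF s, of y z] Cons \<open>rev w = z # v\<close> by simp
    qed
  qed
qed

definition rmB :: "nat set \<Rightarrow> nat \<Rightarrow> nat set \<Rightarrow> nat" where
  "rmB L a R0 = (if a = Min (insert a (L \<union> R0)) then Max (insert a R0) else Min (insert a R0))"

definition rmF :: "nat set \<Rightarrow> nat \<Rightarrow> nat set \<Rightarrow> nat \<Rightarrow> nat" where
  "rmF L a R0 = relabel R0 (insert a R0 - {rmB L a R0})"

lemma rm_gen: "r \<noteq> Leaf \<Longrightarrow>
  root_move (Node l a r) = Node l (rmB (set_tree l) a (set_tree r)) (map_tree (rmF (set_tree l) a (set_tree r)) r)"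
  by (simp add: rmB_def rmF_def Let_def)

lemma rm_single[simp]: "root_move (Node Leaf a Leaf) = Node Leaf a Leaf"
  by simp

lemma hrd_Node_facts:
  assumes "hrd (Node l a r)"
  shows "hrd l" "hrd r" "a \<notin> set_tree l" "a \<notin> set_tree r" "set_tree l \<inter> set_tree r = {}"
    "(l = Leaf \<and> r = Leaf) \<or>
      (r \<noteq> Leaf \<and> ((a = Min (set_tree (Node l a r)) \<and> Max (set_tree (Node l a r)) \<in> set_tree r) \<or>
                     (a = Max (set_tree (Node l a r)) \<and> Min (set_tree (Node l a r)) \<in> set_tree r)))"
proof -
  have h: "hr_cond (Node l a r)" "distinct (inorder l @ a # inorder r)" using assms unfolding hrd_def by auto
  show "hrd l" "hrd r" using h unfolding hrd_def hr_cond_Node by auto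
  show "a \<notin> set_tree l" "a \<notin> set_tree r" "set_tree l \<inter> set_tree r = {}" using h(2) by auto
  show "(l = Leaf \<and> r = Leaf) \<or>
      (r \<noteq> Leaf \<and> ((a = Min (set_tree (Node l a r)) \<and> Max (set_tree (Node l a r)) \<in> set_tree r) \<or>
                     (a = Max (set_tree (Node l a r)) \<and> Min (set_tree (Node l a r)) \<in> set_tree r)))"
    using h(1) unfolding hr_cond_Node by blast
qed

lemma hrd_NodeI:
  assumes "hrd l" "hrd r" "a \<notin> set_tree l" "a \<notin> set_tree r" "set_tree l \<inter> set_tree r = {}"
    "(l = Leaf \<and> r = Leaf) \<or>
      (r \<noteq> Leaf \<and> ((a = Min (set_tree (Node l a r)) \<and> Max (set_tree (Node l a r)) \<in> set_tree r) \<or>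
                     (a = Max (set_tree (Node l a r)) \<and> Min (set_tree (Node l a r)) \<in> set_tree r)))"
  shows "hrd (Node l a r)"
proof -
  have "hr_cond (Node l a r)" unfolding hr_cond_Node using assms(1,2,6) unfolding hrd_def by blast
  moreover have "distinct (inorder (Node l a r))" using assms(1-5) unfolding hrd_def by auto
  ultimately show ?thesis unfolding hrd_def by blast
qed

lemma rm_main:
  assumes h: "hrd (Node l a r)" and rne: "r \<noteq> Leaf"
  defines "S \<equiv> set_tree (Node l a r)"
  defines "b \<equiv> (if a = Min S then Max S else Min S)"
  defines "R \<equiv> insert a (set_tree r)"
  defines "f \<equiv> relabel (set_tree r) (R - {b})"
  shows "root_move (Node l a r) = Node l b (map_tree f r)"
    "smono (set_tree r) f" "f ` set_tree r = R - {b}"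
    "hrd (root_move (Node l a r))" "set_tree (root_move (Node l a r)) = S"
    "(b = Min S) = (a \<noteq> Min S)" "a \<in> R" "b \<in> R" "set_tree r = R - {a}"
    "a \<noteq> Min S \<Longrightarrow> a = Max S"
    "rmB (set_tree l) a (set_tree r) = b" "rmF (set_tree l) a (set_tree r) = f"
proof -
  note fa = hrd_Node_facts[OF h]
  have root: "(a = Min S \<and> Max S \<in> set_tree r) \<or> (a = Max S \<and> Min S \<in> set_tree r)"
    using fa(6) rne unfolding S_def by blast
  have finS: "finite S" "S \<noteq> {}" unfolding S_def by auto
  have finr: "finite (set_tree r)" by simp
  obtain y where y: "y \<in> set_tree r" using rne by (cases r) auto
  have ya: "y \<noteq> a" using y fa(4) by auto
  have rS: "set_tree r \<subseteq> S" "a \<in> S" unfolding S_def by auto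
  have RS: "R \<subseteq> S" unfolding R_def using rS by auto
  have mnmx: "Min S \<noteq> Max S"
  proof
    assume e: "Min S = Max S"
    have "Min S \<le> a" "a \<le> Max S" "Min S \<le> y" "y \<le> Max S" using rS y finS by auto
    then show False using e ya by simp
  qed
  show aR: "a \<in> R" unfolding R_def by simp
  have finR: "finite R" "R \<noteq> {}" unfolding R_def by auto
  have Rb: "(if a = Min (insert a (set_tree l \<union> set_tree r)) then Max (insert a (set_tree r)) else Min (insert a (set_tree r))) = b"
  proof (cases "a = Min S")
    case True
    then have "Max S \<in> set_tree r" using root mnmx by auto
    then have "Max R = Max S" using RS finS finR unfolding R_def
      by (intro Max_eqI) auto
    then show ?thesis using True unfolding b_def R_def S_def by simp
  next
    case False
    then have "Min S \<in> set_tree r" using root by auto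
    then have "Min R = Min S" using RS finS finR unfolding R_def
      by (intro Min_eqI) auto
    then show ?thesis using False unfolding b_def R_def S_def by simp
  qed
  show rB: "rmB (set_tree l) a (set_tree r) = b" unfolding rmB_def using Rb .
  show "rmF (set_tree l) a (set_tree r) = f" unfolding rmF_def rB f_def R_def ..
  show rm: "root_move (Node l a r) = Node l b (map_tree f r)"
    using rne Rb unfolding f_def R_def by (simp add: Let_def)
  show bR: "b \<in> R"
  proof (cases "a = Min S")
    case True
    then have "Max S \<in> set_tree r" using root mnmx by auto
    then show ?thesis using True unfolding b_def R_def by simp
  next
    case False
    then have "Min S \<in> set_tree r" using root by auto
    then show ?thesis using False unfolding b_def R_def by simp
  qed
  show rR: "set_tree r = R - {a}" unfolding R_def using fa(4) by auto
  have cR: "card R = Suc (card (set_tree r))" unfolding R_def using fa(4) finr by simp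
  have cc: "card (set_tree r) = card (R - {b})" using cR bR finR by simp
  show sm: "smono (set_tree r) f" "f ` set_tree r = R - {b}"
    unfolding f_def using relabel_props[OF finr _ cc] finR by auto
  show "(b = Min S) = (a \<noteq> Min S)" unfolding b_def using mnmx by auto
  show amx: "a \<noteq> Min S \<Longrightarrow> a = Max S" using root by auto
  have st: "set_tree (Node l b (map_tree f r)) = S"
  proof -
    have "set_tree (Node l b (map_tree f r)) = insert b (set_tree l \<union> f ` set_tree r)"
      by (simp add: tree.set_map)
    also have "\<dots> = set_tree l \<union> R" using sm(2) bR by auto
    also have "\<dots> = S" unfolding S_def R_def by auto
    finally show ?thesis .
  qed
  then show "set_tree (root_move (Node l a r)) = S" using rm by simp
  have "hrd (Node l b (map_tree f r))"
  proof (rule hrd_NodeI)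
    show "hrd l" using fa(1) .
    have "hr_cond (map_tree f r)" using map_hr sm(1) fa(2) unfolding hrd_def by blast
    moreover have "distinct (inorder (map_tree f r))"
      using fa(2) smono_inj[OF sm(1)] unfolding hrd_def by (simp add: inorder_map distinct_map)
    ultimately show "hrd (map_tree f r)" unfolding hrd_def by blast
    have lR: "set_tree l \<inter> R = {}" unfolding R_def using fa(3,5) by auto
    show "b \<notin> set_tree l" using lR bR by auto
    show "b \<notin> set_tree (map_tree f r)" using sm(2) by (simp add: tree.set_map)
    show "set_tree l \<inter> set_tree (map_tree f r) = {}" using sm(2) lR by (auto simp: tree.set_map)
    have mr: "map_tree f r \<noteq> Leaf" using rne by simp
    have "(b = Min S \<and> Max S \<in> set_tree (map_tree f r)) \<or> (b = Max S \<and> Min S \<in> set_tree (map_tree f r))"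
    proof (cases "a = Min S")
      case True
      then have "b = Max S" unfolding b_def by simp
      moreover have "Min S \<in> R - {b}" using True aR mnmx \<open>b = Max S\<close> by auto
      ultimately show ?thesis using sm(2) by (simp add: tree.set_map)
    next
      case False
      then have "b = Min S" unfolding b_def by simp
      moreover have "Max S \<in> R - {b}" using False amx aR mnmx \<open>b = Min S\<close> by auto
      ultimately show ?thesis using sm(2) by (simp add: tree.set_map)
    qed
    then show "(l = Leaf \<and> map_tree f r = Leaf) \<or>
      (map_tree f r \<noteq> Leaf \<and> ((b = Min (set_tree (Node l b (map_tree f r))) \<and> Max (set_tree (Node l b (map_tree f r))) \<in> set_tree (map_tree f r)) \<or>
                     (b = Max (set_tree (Node l b (map_tree f r))) \<and> Min (set_tree (Node l b (map_tree f r))) \<in> set_tree (map_tree f r))))"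
      using st mr by simp
  qed
  then show "hrd (root_move (Node l a r))" using rm by simp
qed

lemma hrd_map: "smono (set_tree t) f \<Longrightarrow> hrd t \<Longrightarrow> hrd (map_tree f t)"
proof -
  assume a: "smono (set_tree t) f" "hrd t"
  have "hr_cond (map_tree f t)" using map_hr a unfolding hrd_def by blast
  moreover have "distinct (inorder (map_tree f t))"
    using a smono_inj[OF a(1)] unfolding hrd_def by (simp add: inorder_map distinct_map)
  ultimately show ?thesis unfolding hrd_def by blast
qed

lemma rm_invol:
  assumes h: "hrd (Node l a r)"
  shows "root_move (root_move (Node l a r)) = Node l a r"
proof (cases "r = Leaf")
  case True
  then have "l = Leaf" using hrd_Node_facts(6)[OF h] by blast
  then show ?thesis using True by simp
next
  case False
  define S where "S = set_tree (Node l a r)"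
  define b where "b = (if a = Min S then Max S else Min S)"
  define R where "R = insert a (set_tree r)"
  define f where "f = relabel (set_tree r) (R - {b})"
  note m = rm_main[OF h False, folded S_def, folded b_def, folded R_def, folded f_def]
  define r1 where "r1 = map_tree f r"
  have r1: "r1 \<noteq> Leaf" using False unfolding r1_def by simp
  have h1: "hrd (Node l b r1)" using m(1,4) unfolding r1_def by simp
  have s1: "set_tree (Node l b r1) = S" using m(1,5) unfolding r1_def by simp
  define b' where "b' = (if b = Min S then Max S else Min S)"
  define R1 where "R1 = insert b (set_tree r1)"
  define f' where "f' = relabel (set_tree r1) (R1 - {b'})"
  note m1 = rm_main[OF h1 r1, unfolded s1, folded b'_def, folded R1_def, folded f'_def]
  have bb: "b' = a"
  proof (cases "a = Min S")
    case True
    then have "b \<noteq> Min S" using m(6) by simp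
    then show ?thesis unfolding b'_def using True by simp
  next
    case False
    then have "b = Min S" using m(6) by simp
    then show ?thesis unfolding b'_def using m(10)[OF False] by simp
  qed
  have sr1: "set_tree r1 = R - {b}" unfolding r1_def using m(3) by (simp add: tree.set_map)
  have R1R: "R1 = R" unfolding R1_def sr1 using m(8) by auto
  have f'_eq: "f' = relabel (R - {b}) (set_tree r)" unfolding f'_def sr1 R1R bb using m(9) by simp
  have cc: "card (set_tree r) = card (R - {b})"
    using m(3) card_image[OF smono_inj[OF m(2)]] by simp
  have inv: "f' (f x) = x" if "x \<in> set_tree r" for x
  proof -
    have "finite R" unfolding R_def by simp
    then show ?thesis unfolding f'_eq f_def using relabel_inv[of "set_tree r" "R - {b}" x] cc that by simp
  qed
  have "map_tree f' r1 = r" unfolding r1_def tree.map_comp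
    by (rule map_tree_id_on) (simp add: inv)
  then show ?thesis using m(1) m1(1) bb unfolding r1_def by simp
qed

lemma psi_map:
  "smono (set_tree t) f \<Longrightarrow> hrd t \<Longrightarrow> psi j (map_tree f t) = map_tree f (psi j t)"
proof (induction t arbitrary: j)
  case Leaf then show ?case by simp
next
  case (Node l a r)
  note fa = hrd_Node_facts[OF Node.prems(2)]
  have sml: "smono (set_tree l) f" "smono (set_tree r) f" using Node.prems(1) smono_subset by auto
  show ?case
  proof (cases "j < size l")
    case True
    then show ?thesis using Node.IH(1)[OF sml(1) fa(1)] by simp
  next
    case False
    note F1 = False
    show ?thesis
    proof (cases "j = size l")
      case False
      then show ?thesis using F1 Node.IH(2)[OF sml(2) fa(2)] by simp
    next
      case True
      show ?thesis
      proof (cases "r = Leaf")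
        case True
        then have "l = Leaf" using fa(6) by blast
        then show ?thesis using True \<open>j = size l\<close> by simp
      next
        case False
        define S where "S = set_tree (Node l a r)"
        define b where "b = (if a = Min S then Max S else Min S)"
        define R where "R = insert a (set_tree r)"
        define g where "g = relabel (set_tree r) (R - {b})"
        note m = rm_main[OF Node.prems(2) False, folded S_def, folded b_def, folded R_def, folded g_def]
        define tf where "tf = map_tree f (Node l a r)"
        have htf: "hrd tf" unfolding tf_def using hrd_map[OF Node.prems(1,2)] .
        have tf: "tf = Node (map_tree f l) (f a) (map_tree f r)" unfolding tf_def by simp
        have rf: "map_tree f r \<noteq> Leaf" using False by simp
        have sm: "smono S f" using Node.prems(1) unfolding S_def .
        have finS: "finite S" "S \<noteq> {}" unfolding S_def by auto
        have injS: "inj_on f S" using smono_inj[OF sm] .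
        have stf: "set_tree tf = f ` S" unfolding tf_def S_def by (simp add: tree.set_map image_Un)
        define b' where "b' = (if f a = Min (f ` S) then Max (f ` S) else Min (f ` S))"
        define R' where "R' = insert (f a) (set_tree (map_tree f r))"
        define g' where "g' = relabel (set_tree (map_tree f r)) (R' - {b'})"
        note m' = rm_main[OF htf[unfolded tf] rf, unfolded tf[symmetric] stf, folded b'_def, folded R'_def, folded g'_def]
        have aS: "a \<in> S" unfolding S_def by simp
        have RS: "R \<subseteq> S" unfolding R_def S_def by auto
        have mn: "Min (f ` S) = f (Min S)" "Max (f ` S) = f (Max S)" using smono_Min smono_Max finS sm by auto
        have MinS: "Min S \<in> S" "Max S \<in> S" using finS by auto
        have eqa: "(f a = f (Min S)) = (a = Min S)" using inj_on_eq_iff[OF injS aS MinS(1)] .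
        have bf: "b' = f b" unfolding b'_def b_def mn eqa by simp
        have R'f: "R' = f ` R" unfolding R'_def R_def by (simp add: tree.set_map)
        have "f ` (R - {b}) = f ` R - f ` {b}"
          by (rule inj_on_image_set_diff[OF injS]) (use RS m(8) in auto)
        then have R'b: "R' - {b'} = f ` (R - {b})" unfolding R'f bf by simp
        have cc: "card (set_tree r) = card (R - {b})"
          using m(3) card_image[OF smono_inj[OF m(2)]] by simp
        have "set_tree r \<union> (R - {b}) \<subseteq> S" using RS unfolding R_def by auto
        then have smAB: "smono (set_tree r \<union> (R - {b})) f" using smono_subset[OF sm] by blast
        have gg: "g' (f x) = f (g x)" if "x \<in> set_tree r" for x
        proof -
          have "g' (f x) = relabel (f ` set_tree r) (f ` (R - {b})) (f x)"
            unfolding g'_def R'b by (simp add: tree.set_map)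
          also have "\<dots> = f (g x)" unfolding g_def
            using relabel_map[OF _ _ cc that smAB] unfolding R_def by simp
          finally show ?thesis .
        qed
        have "map_tree g' (map_tree f r) = map_tree f (map_tree g r)"
          unfolding tree.map_comp by (rule map_tree_cong_set) (simp add: gg)
        then have "root_move tf = map_tree f (root_move (Node l a r))"
          using m'(1) m(1) bf tf by simp
        then show ?thesis using True unfolding tf_def by simp
      qed
    qed
  qed
qed

fun rebuild :: "nat tree \<Rightarrow> nat set \<Rightarrow> nat tree" where
  "rebuild Leaf X = Leaf"
| "rebuild (Node l a r) X =
    (if size l \<in> X then root_move (Node (rebuild l X) a (rebuild r {i. Suc (size l) + i \<in> X}))
     else Node (rebuild l X) a (rebuild r {i. Suc (size l) + i \<in> X}))"

definition tog :: "nat \<Rightarrow> nat set \<Rightarrow> nat set" where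
  "tog i X = (if i \<in> X then X - {i} else insert i X)"

lemma size0: "(size t = 0) = (t = Leaf)"
  by (cases t) auto

lemma rm_shape: "\<exists>b r1. root_move (Node l a r) = Node l b r1"
  by (simp add: Let_def)

lemma size_rm[simp]: "size (root_move t) = size t"
proof (cases t)
  case Leaf then show ?thesis by simp
next
  case (Node l a r) then show ?thesis by (simp add: Let_def)
qed

lemma size_psi[simp]: "size (psi i t) = size t"
  by (induction i t rule: psi.induct) (auto simp del: root_move.simps)

declare root_move.simps[simp del]

lemma rebuild_props:
  "hrd T \<Longrightarrow> hrd (rebuild T X) \<and> set_tree (rebuild T X) = set_tree T \<and>
     size (rebuild T X) = size T \<and> nleaf (rebuild T X) = nleaf T"
proof (induction T arbitrary: X)
  case Leaf then show ?case by simp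
next
  case (Node l a r)
  note fa = hrd_Node_facts[OF Node.prems]
  define Xr where "Xr = {i. Suc (size l) + i \<in> X}"
  define l' where "l' = rebuild l X"
  define r' where "r' = rebuild r Xr"
  have il: "hrd l'" "set_tree l' = set_tree l" "size l' = size l" "nleaf l' = nleaf l"
    using Node.IH(1)[OF fa(1), of X] unfolding l'_def by auto
  have ir: "hrd r'" "set_tree r' = set_tree r" "size r' = size r" "nleaf r' = nleaf r"
    using Node.IH(2)[OF fa(2), of Xr] unfolding r'_def by auto
  have lL: "(l' = Leaf) = (l = Leaf)" by (simp only: size0[symmetric] il(3))
  have rL: "(r' = Leaf) = (r = Leaf)" by (simp only: size0[symmetric] ir(3))
  have st: "set_tree (Node l' a r') = set_tree (Node l a r)" using il ir by simp
  have h0: "hrd (Node l' a r')"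
  proof (rule hrd_NodeI)
    show "hrd l'" "hrd r'" by (rule il(1), rule ir(1))
    show "a \<notin> set_tree l'" "a \<notin> set_tree r'" "set_tree l' \<inter> set_tree r' = {}"
      using fa(3,4,5) il ir by auto
    show "(l' = Leaf \<and> r' = Leaf) \<or>
      (r' \<noteq> Leaf \<and> ((a = Min (set_tree (Node l' a r')) \<and> Max (set_tree (Node l' a r')) \<in> set_tree r') \<or>
                     (a = Max (set_tree (Node l' a r')) \<and> Min (set_tree (Node l' a r')) \<in> set_tree r')))"
      unfolding st lL rL ir(2) by (rule fa(6))
  qed
  have n0: "nleaf (Node l' a r') = nleaf (Node l a r)" using il ir lL rL by simp
  have z0: "size (Node l' a r') = size (Node l a r)" using il ir by simp
  have rb: "rebuild (Node l a r) X = (if size l \<in> X then root_move (Node l' a r') else Node l' a r')"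
    unfolding l'_def r'_def Xr_def by simp
  show ?case
  proof (cases "size l \<in> X")
    case False
    then show ?thesis using rb h0 st n0 z0 by simp
  next
    case True
    show ?thesis
    proof (cases "r = Leaf")
      case True
      then have "l = Leaf" using fa(6) by blast
      then have "l' = Leaf" "r' = Leaf" using lL rL \<open>r = Leaf\<close> by auto
      then show ?thesis using rb h0 st n0 z0 by simp
    next
      case False
      then have r'ne: "r' \<noteq> Leaf" using rL by simp
      obtain b f where bf: "root_move (Node l' a r') = Node l' b (map_tree f r')"
        using rm_main(1)[OF h0 r'ne] by blast
      have "hrd (root_move (Node l' a r'))" "set_tree (root_move (Node l' a r')) = set_tree (Node l' a r')"
        using rm_main(4,5)[OF h0 r'ne] by auto
      moreover have "size (root_move (Node l' a r')) = size (Node l a r)" using z0 by simp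
      moreover have "nleaf (root_move (Node l' a r')) = nleaf (Node l a r)" using bf n0 r'ne by simp
      ultimately show ?thesis using rb True st by simp
    qed
  qed
qed

lemma rebuild_cong: "(\<And>i. i < size t \<Longrightarrow> (i \<in> X) = (i \<in> Y)) \<Longrightarrow> rebuild t X = rebuild t Y"
proof (induction t arbitrary: X Y)
  case Leaf then show ?case by simp
next
  case (Node l a r)
  have e1: "(size l \<in> X) = (size l \<in> Y)" using Node.prems[of "size l"] by simp
  have e2: "rebuild l X = rebuild l Y"
  proof (rule Node.IH(1))
    fix i assume "i < size l"
    then have "i < size (Node l a r)" by simp
    then show "(i \<in> X) = (i \<in> Y)" by (rule Node.prems)
  qed
  have e3: "rebuild r {i. Suc (size l) + i \<in> X} = rebuild r {i. Suc (size l) + i \<in> Y}"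
  proof (rule Node.IH(2))
    fix i assume "i < size r"
    then have "Suc (size l) + i < size (Node l a r)" by simp
    then have "(Suc (size l) + i \<in> X) = (Suc (size l) + i \<in> Y)" by (rule Node.prems)
    then show "(i \<in> {i. Suc (size l) + i \<in> X}) = (i \<in> {i. Suc (size l) + i \<in> Y})" by simp
  qed
  show ?case using e1 e2 e3 by (simp only: rebuild.simps)
qed

lemma rebuild_empty: "rebuild t {} = t"
  by (induction t) auto

lemma psi_rm_root: "size l1 = i \<Longrightarrow> psi i (root_move (Node l1 a r1)) = root_move (root_move (Node l1 a r1))"
proof -
  assume s: "size l1 = i"
  obtain b r2 where e: "root_move (Node l1 a r1) = Node l1 b r2" using rm_shape by blast
  show ?thesis unfolding e using s by simp
qed

lemma rebuild_tog:
  "hrd T \<Longrightarrow> i < size T \<Longrightarrow> psi i (rebuild T X) = rebuild T (tog i X)"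
proof (induction T arbitrary: i X)
  case Leaf then show ?case by simp
next
  case (Node l a r)
  note fa = hrd_Node_facts[OF Node.prems(1)]
  define Xr where "Xr = {k. Suc (size l) + k \<in> X}"
  define l' where "l' = rebuild l X"
  define r' where "r' = rebuild r Xr"
  have il: "hrd l'" "set_tree l' = set_tree l" "size l' = size l"
    using rebuild_props[OF fa(1), of X] unfolding l'_def by auto
  have ir: "hrd r'" "set_tree r' = set_tree r" "size r' = size r"
    using rebuild_props[OF fa(2), of Xr] unfolding r'_def by auto
  have rL: "(r' = Leaf) = (r = Leaf)" by (simp only: size0[symmetric] ir(3))
  have c1: "rebuild l (X - {size l}) = l'" unfolding l'_def by (rule rebuild_cong) auto
  have c2: "{k. Suc (size l) + k \<in> X - {size l}} = Xr" unfolding Xr_def by auto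
  have "rebuild (Node l a r) (X - {size l}) = Node l' a r'" using c1 c2 unfolding r'_def by simp
  then have h0: "hrd (Node l' a r')" using rebuild_props[OF Node.prems(1), of "X - {size l}"] by simp
  have rb: "rebuild (Node l a r) X = (if size l \<in> X then root_move (Node l' a r') else Node l' a r')"
    unfolding l'_def r'_def Xr_def by simp
  show ?case
  proof (cases "i < size l")
    case True
    have e1: "(size l \<in> tog i X) = (size l \<in> X)" using True unfolding tog_def by auto
    have e2: "{k. Suc (size l) + k \<in> tog i X} = Xr" using True unfolding tog_def Xr_def by auto
    have e3: "rebuild l (tog i X) = psi i l'" using Node.IH(1)[OF fa(1) True] unfolding l'_def by simp
    have rb2: "rebuild (Node l a r) (tog i X) =
        (if size l \<in> X then root_move (Node (psi i l') a r') else Node (psi i l') a r')"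
      using e1 e2 e3 unfolding r'_def by simp
    have sp: "set_tree (psi i l') = set_tree l'"
      using rebuild_props[OF fa(1), of "tog i X"] e3 il by simp
    show ?thesis
    proof (cases "size l \<in> X")
      case False
      then show ?thesis using rb rb2 True il by simp
    next
      case True
      have rne: "r \<noteq> Leaf" using \<open>i < size l\<close> fa(6) by auto
      then have r'ne: "r' \<noteq> Leaf" using rL by simp
      have "psi i (root_move (Node l' a r')) = root_move (Node (psi i l') a r')"
        unfolding rm_gen[OF r'ne] sp using \<open>i < size l\<close> il by simp
      then show ?thesis using rb rb2 True by simp
    qed
  next
    case False
    note F1 = False
    show ?thesis
    proof (cases "i = size l")
      case True
      have e2: "{k. Suc (size l) + k \<in> tog i X} = Xr" using True unfolding tog_def Xr_def by auto
      have e3: "rebuild l (tog i X) = l'" unfolding l'_def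
        by (rule rebuild_cong) (use True in \<open>auto simp: tog_def\<close>)
      show ?thesis
      proof (cases "size l \<in> X")
        case True
        then have "size l \<notin> tog i X" using \<open>i = size l\<close> unfolding tog_def by simp
        then have "rebuild (Node l a r) (tog i X) = Node l' a r'" using e2 e3 unfolding r'_def by simp
        moreover have "psi i (root_move (Node l' a r')) = Node l' a r'"
          using psi_rm_root[of l' i a r'] il \<open>i = size l\<close> rm_invol[OF h0] by simp
        ultimately show ?thesis using rb True by simp
      next
        case False
        then have "size l \<in> tog i X" using \<open>i = size l\<close> unfolding tog_def by simp
        then have "rebuild (Node l a r) (tog i X) = root_move (Node l' a r')" using e2 e3 unfolding r'_def by simp
        moreover have "psi i (Node l' a r') = root_move (Node l' a r')" using il \<open>i = size l\<close> by simp
        ultimately show ?thesis using rb False by simp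
      qed
    next
      case False
      define j where "j = i - Suc (size l)"
      have ij: "i = Suc (size l) + j" using F1 False unfolding j_def by simp
      have jr: "j < size r" using Node.prems(2) ij by simp
      have e1: "(size l \<in> tog i X) = (size l \<in> X)" using ij unfolding tog_def by auto
      have e2: "{k. Suc (size l) + k \<in> tog i X} = tog j Xr" using ij unfolding tog_def Xr_def by auto
      have e3: "rebuild l (tog i X) = l'" unfolding l'_def
        by (rule rebuild_cong) (use ij in \<open>auto simp: tog_def\<close>)
      have ih: "psi j r' = rebuild r (tog j Xr)" using Node.IH(2)[OF fa(2) jr] unfolding r'_def by simp
      have rb2: "rebuild (Node l a r) (tog i X) =
          (if size l \<in> X then root_move (Node l' a (psi j r')) else Node l' a (psi j r'))"
        using e1 e2 e3 ih by simp
      have sp: "set_tree (psi j r') = set_tree r'"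
        using rebuild_props[OF fa(2), of "tog j Xr"] ih ir by simp
      have hp: "hrd (psi j r')" using rebuild_props[OF fa(2), of "tog j Xr"] ih by simp
      show ?thesis
      proof (cases "size l \<in> X")
        case False
        then show ?thesis using rb rb2 ij il by simp
      next
        case True
        have r'ne: "r' \<noteq> Leaf" using jr rL by (cases r) auto
        have pne: "psi j r' \<noteq> Leaf"
        proof
          assume "psi j r' = Leaf"
          then have "size r' = 0" using size_psi[of j r'] by simp
          then show False using r'ne size0 by blast
        qed
        have smF: "smono (set_tree r') (rmF (set_tree l') a (set_tree r'))"
          using rm_main(2,12)[OF h0 r'ne] by simp
        have "psi i (root_move (Node l' a r')) = root_move (Node l' a (psi j r'))"
          unfolding rm_gen[OF r'ne] rm_gen[OF pne] sp using ij il psi_map[OF smF ir(1)] by simp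
        then show ?thesis using rb rb2 True by simp
      qed
    qed
  qed
qed

lemma orb_size: "S \<in> orb T \<Longrightarrow> size S = size T"
  by (induction rule: orb.induct) auto

lemma orb_trans: "s \<in> orb t \<Longrightarrow> t \<in> orb T \<Longrightarrow> s \<in> orb T"
proof (induction rule: orb.induct)
  case orb_refl then show ?case by simp
next
  case (orb_step s i)
  have "size t = size T" using orb_step(4) orb_size by blast
  then have "i < size T" using orb_step(2) by simp
  then show ?case using orb_step by (simp add: orb.orb_step)
qed

lemma orb_left: "l' \<in> orb l \<Longrightarrow> Node l' a r \<in> orb (Node l a r)"
proof (induction rule: orb.induct)
  case orb_refl then show ?case by (rule orb.orb_refl)
next
  case (orb_step t i)
  have "size t = size l" using orb_step(1) orb_size by blast
  then have "psi i (Node t a r) = Node (psi i t) a r" using orb_step(2) by simp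
  moreover have "i < size (Node l a r)" using orb_step(2) by simp
  ultimately show ?case using orb.orb_step[OF orb_step(3)] by metis
qed

lemma orb_right: "r' \<in> orb r \<Longrightarrow> Node l a r' \<in> orb (Node l a r)"
proof (induction rule: orb.induct)
  case orb_refl then show ?case by (rule orb.orb_refl)
next
  case (orb_step t i)
  have "psi (Suc (size l) + i) (Node l a t) = Node l a (psi i t)" by simp
  moreover have "Suc (size l) + i < size (Node l a r)" using orb_step(2) by simp
  ultimately show ?case using orb.orb_step[OF orb_step(3)] by metis
qed

lemma rebuild_orb: "rebuild T X \<in> orb T"
proof (induction T arbitrary: X)
  case Leaf then show ?case by (simp add: orb.orb_refl)
next
  case (Node l a r)
  define l' where "l' = rebuild l X"
  define r' where "r' = rebuild r {i. Suc (size l) + i \<in> X}"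
  have A: "Node l' a r \<in> orb (Node l a r)" using orb_left Node.IH(1) unfolding l'_def by blast
  have B: "Node l' a r' \<in> orb (Node l' a r)" using orb_right Node.IH(2) unfolding r'_def by blast
  have C: "Node l' a r' \<in> orb (Node l a r)" using orb_trans[OF B A] .
  have sl: "size l' = size l" using orb_size Node.IH(1) unfolding l'_def by blast
  have D: "root_move (Node l' a r') \<in> orb (Node l a r)"
  proof -
    have "psi (size l) (Node l' a r') = root_move (Node l' a r')" using sl by simp
    moreover have "size l < size (Node l a r)" by simp
    ultimately show ?thesis using orb.orb_step[OF C] by metis
  qed
  show ?case using C D unfolding l'_def r'_def by simp
qed

lemma orb_rebuild: "S \<in> orb T \<Longrightarrow> hrd T \<Longrightarrow> \<exists>X. S = rebuild T X"
proof (induction rule: orb.induct)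
  case orb_refl then show ?case using rebuild_empty by metis
next
  case (orb_step t i)
  then obtain X where "t = rebuild T X" by blast
  then have "psi i t = rebuild T (tog i X)" using rebuild_tog orb_step by blast
  then show ?case by blast
qed

lemma turns_append:
  "turns (xs @ y # ys) = turns (xs @ [y]) + turns (y # ys) +
     (if xs \<noteq> [] \<and> ys \<noteq> [] \<and> (last xs < y) \<noteq> (y < hd ys) then 1 else 0)"
proof (induction xs rule: induct_list012)
  case 1 then show ?case by simp
next
  case (2 x) then show ?case by (cases ys) simp_all
next
  case (3 x1 x2 xs)
  have a: "turns (x1 # x2 # xs @ y # ys) = (if (x1 < x2) = (x2 < hd (xs @ y # ys)) then 0 else 1) + turns (x2 # xs @ y # ys)"
    by (simp add: turns_Cons2)
  have b: "turns (x1 # x2 # xs @ [y]) = (if (x1 < x2) = (x2 < hd (xs @ [y])) then 0 else 1) + turns (x2 # xs @ [y])"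
    by (simp add: turns_Cons2)
  have c: "hd (xs @ y # ys) = hd (xs @ [y])" by (cases xs) auto
  have d: "last (x1 # x2 # xs) = last (x2 # xs)" by simp
  show ?case using a b c d 3(2) by simp
qed

lemma inorder_Nil_iff: "(inorder t = []) = (t = Leaf)"
  by (cases t) auto

lemma LREC:
  assumes d: "distinct (u @ c # v)" and vne: "v \<noteq> []"
    and mi: "m \<Longrightarrow> \<forall>x \<in> set u \<union> set v. c < x" and ma: "\<not> m \<Longrightarrow> \<forall>x \<in> set u \<union> set v. x < c"
  shows "turns (u @ c # v) = turns u + turns v + (if u = [] then 0 else 1)
            + (if 2 \<le> length u \<and> Ew u = m then 1 else 0) + (if 2 \<le> length v \<and> Dw v = m then 1 else 0)"
    "Dw (u @ c # v) = (if u = [] then \<not> m else if length u = 1 then m else Dw u)"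
    "Ew (u @ c # v) = (if length v = 1 then m else Ew v)"
proof -
  have cn: "x \<noteq> c" if "x \<in> set u \<union> set v" for x using d that by auto
  have dir: "(c < x) = m \<and> (x < c) = (\<not> m)" if xin: "x \<in> set u \<union> set v" for x
  proof (cases m)
    case True
    then have "c < x" using mi xin by blast
    then show ?thesis using True by simp
  next
    case False
    then have "x < c" using ma xin by blast
    then show ?thesis using False by simp
  qed
  have dir1: "(c < x) = m" if "x \<in> set u \<union> set v" for x using dir[OF that] by blast
  have dir2: "(x < c) = (\<not> m)" if "x \<in> set u \<union> set v" for x using dir[OF that] by blast
  have T1: "turns (c # v) = turns v + (if 2 \<le> length v \<and> Dw v = m then 1 else 0)"
  proof (cases v)
    case Nil then show ?thesis using vne by simp
  next
    case (Cons x v')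
    show ?thesis
    proof (cases v')
      case Nil then show ?thesis using Cons by simp
    next
      case (Cons y r)
      have "x \<noteq> y" using d \<open>v = x # v'\<close> Cons by auto
      moreover have "(c < x) = m" using dir1 \<open>v = x # v'\<close> by simp
      ultimately show ?thesis using \<open>v = x # v'\<close> Cons by (auto simp: Dw_def)
    qed
  qed
  have T2: "turns (u @ [c]) = turns u + (if 2 \<le> length u \<and> Ew u = m then 1 else 0)"
  proof (cases "u = []")
    case True then show ?thesis by simp
  next
    case False
    define p where "p = last u"
    define u0 where "u0 = butlast u"
    have u: "u = u0 @ [p]" unfolding p_def u0_def using False by simp
    have pc: "(p < c) = (\<not> m)" using dir2 False unfolding p_def by simp
    have ta: "turns (u0 @ p # [c]) = turns (u0 @ [p]) + turns [p, c] +
       (if u0 \<noteq> [] \<and> (last u0 < p) \<noteq> (p < c) then 1 else 0)"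
      using turns_append[of u0 p "[c]"] by simp
    have Eu: "Ew u = (u0 \<noteq> [] \<and> last u0 < p)"
    proof (cases "u0 = []")
      case True then show ?thesis unfolding u Ew_def by simp
    next
      case False
      then have "u0 = butlast u0 @ [last u0]" by simp
      then obtain u1 q where "u0 = u1 @ [q]" by blast
      then show ?thesis unfolding u Ew_def by simp
    qed
    have lu: "(2 \<le> length u) = (u0 \<noteq> [])" unfolding u by (cases u0) auto
    show ?thesis using ta pc Eu lu unfolding u by auto
  qed
  have T3: "turns (u @ c # v) = turns (u @ [c]) + turns (c # v) + (if u \<noteq> [] then 1 else 0)"
  proof -
    have "(last u < c) \<noteq> (c < hd v)" if "u \<noteq> []"
    proof -
      have "last u \<in> set u" using that by simp
      then have "(last u < c) = (\<not> m)" using dir2 by simp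
      moreover have "hd v \<in> set v" using vne by simp
      then have "(c < hd v) = m" using dir1 by simp
      ultimately show ?thesis by simp
    qed
    then show ?thesis using turns_append[of u c v] vne by auto
  qed
  show "turns (u @ c # v) = turns u + turns v + (if u = [] then 0 else 1)
            + (if 2 \<le> length u \<and> Ew u = m then 1 else 0) + (if 2 \<le> length v \<and> Dw v = m then 1 else 0)"
    using T1 T2 T3 by simp
  show "Dw (u @ c # v) = (if u = [] then \<not> m else if length u = 1 then m else Dw u)"
  proof (cases u)
    case Nil
    obtain x v' where v: "v = x # v'" using vne by (cases v) auto
    have "(x < c) = (\<not> m)" using dir2 v by simp
    then show ?thesis using Nil v by (simp add: Dw_def)
  next
    case (Cons p u')
    show ?thesis
    proof (cases u')
      case Nil
      have "(c < p) = m" using dir1 \<open>u = p # u'\<close> by simp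
      then show ?thesis using Nil \<open>u = p # u'\<close> by (simp add: Dw_def)
    next
      case (Cons q r)
      then show ?thesis using \<open>u = p # u'\<close> by (simp add: Dw_def)
    qed
  qed
  show "Ew (u @ c # v) = (if length v = 1 then m else Ew v)"
  proof -
    have "v = butlast v @ [last v]" using vne by simp
    then obtain v1 z where v: "v = v1 @ [z]" by blast
    have zin: "z \<in> set v" using v by simp
    show ?thesis
    proof (cases "v1 = []")
      case True
      have "(c < z) = m" using dir1 zin by simp
      then show ?thesis unfolding Ew_def using v True by simp
    next
      case False
      then have "v1 = butlast v1 @ [last v1]" by simp
      then obtain v2 y where "v1 = v2 @ [y]" by blast
      then show ?thesis unfolding Ew_def using v by simp
    qed
  qed
qed

definition gap :: "nat tree \<Rightarrow> int" where
  "gap t = (if t = Leaf then 0 else int (turns (inorder t)) + 1 - int (nleaf t))"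

lemma TREC:
  assumes h: "hrd (Node l c r)" and rne: "r \<noteq> Leaf"
    and mdef: "m = (c = Min (set_tree (Node l c r)))"
  shows "gap (Node l c r) = gap l + gap r + (if 2 \<le> size l \<and> Ew (inorder l) = m then 1 else 0)
            + (if 2 \<le> size r \<and> Dw (inorder r) = m then 1 else 0)"
    "Dw (inorder (Node l c r)) = (if l = Leaf then \<not> m else if size l = 1 then m else Dw (inorder l))"
    "Ew (inorder (Node l c r)) = (if size r = 1 then m else Ew (inorder r))"
proof -
  note fa = hrd_Node_facts[OF h]
  define S where "S = set_tree (Node l c r)"
  have root: "(c = Min S \<and> Max S \<in> set_tree r) \<or> (c = Max S \<and> Min S \<in> set_tree r)"
    using fa(6) rne unfolding S_def by blast
  have finS: "finite S" unfolding S_def by simp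
  have d: "distinct (inorder l @ c # inorder r)" using h unfolding hrd_def by simp
  have vne: "inorder r \<noteq> []" using rne inorder_Nil_iff by blast
  have sub: "set (inorder l) \<union> set (inorder r) \<subseteq> S" unfolding S_def by auto
  have cn: "x \<noteq> c" if "x \<in> set (inorder l) \<union> set (inorder r)" for x using d that by auto
  have mi: "\<forall>x \<in> set (inorder l) \<union> set (inorder r). c < x" if m
  proof
    fix x assume x: "x \<in> set (inorder l) \<union> set (inorder r)"
    have "Min S \<le> x" using x sub finS by auto
    moreover have "c = Min S" using that mdef unfolding S_def by simp
    ultimately show "c < x" using cn[OF x] by simp
  qed
  have ma: "\<forall>x \<in> set (inorder l) \<union> set (inorder r). x < c" if "\<not> m"
  proof
    fix x assume x: "x \<in> set (inorder l) \<union> set (inorder r)"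
    have "x \<le> Max S" using x sub finS by auto
    moreover have "c = Max S" using that mdef root unfolding S_def by auto
    ultimately show "x < c" using cn[OF x] by simp
  qed
  note L = LREC[OF d vne mi ma]
  have io: "inorder (Node l c r) = inorder l @ c # inorder r" by simp
  show "Dw (inorder (Node l c r)) = (if l = Leaf then \<not> m else if size l = 1 then m else Dw (inorder l))"
  proof -
    have e: "Dw (inorder (Node l c r)) = (if inorder l = [] then \<not> m else if length (inorder l) = 1 then m else Dw (inorder l))"
      by (subst io) (rule L(2))
    show ?thesis unfolding e by (simp add: inorder_Nil_iff)
  qed
  show "Ew (inorder (Node l c r)) = (if size r = 1 then m else Ew (inorder r))"
  proof -
    have e: "Ew (inorder (Node l c r)) = (if length (inorder r) = 1 then m else Ew (inorder r))"
      by (subst io) (rule L(3))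
    show ?thesis unfolding e by simp
  qed
  have nl: "nleaf (Node l c r) = nleaf l + nleaf r" using rne by simp
  show "gap (Node l c r) = gap l + gap r + (if 2 \<le> size l \<and> Ew (inorder l) = m then 1 else 0)
            + (if 2 \<le> size r \<and> Dw (inorder r) = m then 1 else 0)"
  proof (cases "l = Leaf")
    case True
    then show ?thesis unfolding gap_def using L(1) rne nl by simp
  next
    case False
    then have "inorder l \<noteq> []" using inorder_Nil_iff by blast
    then show ?thesis unfolding gap_def using L(1) rne nl False by simp
  qed
qed

lemma gap_nonneg: "hrd t \<Longrightarrow> 0 \<le> gap t"
proof (induction t)
  case Leaf then show ?case by (simp add: gap_def)
next
  case (Node l a r)
  note fa = hrd_Node_facts[OF Node.prems]
  show ?case
  proof (cases "r = Leaf")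
    case True
    then have "l = Leaf" using fa(6) by blast
    then show ?thesis using True by (simp add: gap_def)
  next
    case False
    have "0 \<le> gap l" "0 \<le> gap r" using Node.IH fa(1,2) by auto
    then show ?thesis using TREC(1)[OF Node.prems False refl] by simp
  qed
qed

lemma gap_map: "smono (set_tree t) f \<Longrightarrow> gap (map_tree f t) = gap t"
  unfolding gap_def by (simp add: inorder_map turns_map)

lemma single_props:
  assumes "hrd t" "size t = 1"
  shows "rebuild t X = t" "gap t = 0" "\<not> Dw (inorder t)"
proof -
  obtain l a r where t: "t = Node l a r" using assms(2) by (cases t) auto
  have "l = Leaf" "r = Leaf" using assms(2) t size0 by auto
  then show "rebuild t X = t" "gap t = 0" "\<not> Dw (inorder t)" using t by (auto simp: gap_def Dw_def)
qed

lemma STEP: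
  fixes X :: "nat set"
  assumes h: "hrd (Node l a r)" and rne: "r \<noteq> Leaf"
  defines "l' \<equiv> rebuild l X"
  defines "r' \<equiv> rebuild r {i. Suc (size l) + i \<in> X}"
  defines "m \<equiv> ((a = Min (set_tree (Node l a r))) \<noteq> (size l \<in> X))"
  shows "gap (rebuild (Node l a r) X) = gap l' + gap r' + (if 2 \<le> size l \<and> Ew (inorder l') = m then 1 else 0)
            + (if 2 \<le> size r \<and> Dw (inorder r') = m then 1 else 0)"
    "Dw (inorder (rebuild (Node l a r) X)) = (if l = Leaf then \<not> m else if size l = 1 then m else Dw (inorder l'))"
    "Ew (inorder (rebuild (Node l a r) X)) = (if size r = 1 then m else Ew (inorder r'))"
proof -
  note fa = hrd_Node_facts[OF h]
  define Xr where "Xr = {i. Suc (size l) + i \<in> X}"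
  have il: "hrd l'" "set_tree l' = set_tree l" "size l' = size l"
    using rebuild_props[OF fa(1), of X] unfolding l'_def by auto
  have ir: "hrd r'" "set_tree r' = set_tree r" "size r' = size r"
    using rebuild_props[OF fa(2), of Xr] unfolding r'_def Xr_def by auto
  have lL: "(l' = Leaf) = (l = Leaf)" by (simp only: size0[symmetric] il(3))
  have r'ne: "r' \<noteq> Leaf"
  proof
    assume "r' = Leaf"
    then have "size r = 0" using ir(3) by simp
    then show False using rne size0 by blast
  qed
  have c1: "rebuild l (X - {size l}) = l'" unfolding l'_def by (rule rebuild_cong) auto
  have c2: "{k. Suc (size l) + k \<in> X - {size l}} = Xr" unfolding Xr_def by auto
  have "rebuild (Node l a r) (X - {size l}) = Node l' a r'" using c1 c2 unfolding r'_def Xr_def by simp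
  then have h0: "hrd (Node l' a r')" using rebuild_props[OF h, of "X - {size l}"] by simp
  have st: "set_tree (Node l' a r') = set_tree (Node l a r)" using il ir by simp
  have rb: "rebuild (Node l a r) X = (if size l \<in> X then root_move (Node l' a r') else Node l' a r')"
    unfolding l'_def r'_def by simp
  have "gap (rebuild (Node l a r) X) = gap l' + gap r' + (if 2 \<le> size l \<and> Ew (inorder l') = m then 1 else 0)
            + (if 2 \<le> size r \<and> Dw (inorder r') = m then 1 else 0) \<and>
    Dw (inorder (rebuild (Node l a r) X)) = (if l = Leaf then \<not> m else if size l = 1 then m else Dw (inorder l')) \<and>
    Ew (inorder (rebuild (Node l a r) X)) = (if size r = 1 then m else Ew (inorder r'))"
  proof (cases "size l \<in> X")
    case False
    have mm: "m = (a = Min (set_tree (Node l' a r')))" unfolding m_def st using False by simp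
    note T = TREC[OF h0 r'ne mm]
    show ?thesis using T rb False il ir lL by simp
  next
    case True
    define S where "S = set_tree (Node l' a r')"
    define b where "b = (if a = Min S then Max S else Min S)"
    define R where "R = insert a (set_tree r')"
    define f where "f = relabel (set_tree r') (R - {b})"
    note M = rm_main[OF h0 r'ne, folded S_def, folded b_def, folded R_def, folded f_def]
    have h1: "hrd (Node l' b (map_tree f r'))" using M(1,4) by simp
    have s1: "set_tree (Node l' b (map_tree f r')) = S" using M(1,5) by simp
    have mS: "m = (a \<noteq> Min S)" unfolding m_def S_def st using True by simp
    have mm: "m = (b = Min (set_tree (Node l' b (map_tree f r'))))"
      unfolding s1 using mS M(6) by simp
    have mne: "map_tree f r' \<noteq> Leaf" using r'ne by simp
    note T = TREC[OF h1 mne mm]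
    have io: "inorder (map_tree f r') = map f (inorder r')" by (rule inorder_map)
    have smi: "smono (set (inorder r')) f" using M(2) by simp
    have g: "gap (map_tree f r') = gap r'" using gap_map[OF M(2)] .
    have dd: "Dw (inorder (map_tree f r')) = Dw (inorder r')" "Ew (inorder (map_tree f r')) = Ew (inorder r')"
      unfolding io using Dw_map[OF smi] Ew_map[OF smi] by auto
    show ?thesis using T rb True il ir lL M(1) g dd by simp
  qed
  then show "gap (rebuild (Node l a r) X) = gap l' + gap r' + (if 2 \<le> size l \<and> Ew (inorder l') = m then 1 else 0)
            + (if 2 \<le> size r \<and> Dw (inorder r') = m then 1 else 0)"
    "Dw (inorder (rebuild (Node l a r) X)) = (if l = Leaf then \<not> m else if size l = 1 then m else Dw (inorder l'))"
    "Ew (inorder (rebuild (Node l a r) X)) = (if size r = 1 then m else Ew (inorder r'))" by blast+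
qed

lemma K:
  "hrd T \<Longrightarrow> 2 \<le> size T \<Longrightarrow> \<exists>X0 X1. gap (rebuild T X0) = 0 \<and> gap (rebuild T X1) = 0 \<and>
     \<not> Dw (inorder (rebuild T X0)) \<and> Dw (inorder (rebuild T X1)) \<and>
     Ew (inorder (rebuild T X0)) \<noteq> Ew (inorder (rebuild T X1)) \<and>
     (\<forall>X. gap (rebuild T X) = 0 \<longrightarrow> rebuild T X = rebuild T X0 \<or> rebuild T X = rebuild T X1)"
proof (induction T)
  case Leaf then show ?case by simp
next
  case (Node l a r)
  note fa = hrd_Node_facts[OF Node.prems(1)]
  have rne: "r \<noteq> Leaf"
  proof
    assume "r = Leaf"
    then have "l = Leaf" using fa(6) by blast
    then show False using \<open>r = Leaf\<close> Node.prems(2) by simp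
  qed
  define DL where "DL = (\<lambda>m t. if l = Leaf then \<not> m else if size l = 1 then m else Dw (inorder t))"
  define ER where "ER = (\<lambda>m t. if size r = 1 then m else Ew (inorder t))"
  have "\<exists>XL :: bool \<Rightarrow> nat set. (\<forall>m. gap (rebuild l (XL m)) = 0) \<and>
      (\<forall>m. \<not> (2 \<le> size l \<and> Ew (inorder (rebuild l (XL m))) = m)) \<and>
      (\<forall>m X. gap (rebuild l X) = 0 \<and> \<not> (2 \<le> size l \<and> Ew (inorder (rebuild l X)) = m) \<longrightarrow> rebuild l X = rebuild l (XL m)) \<and>
      DL True (rebuild l (XL True)) \<noteq> DL False (rebuild l (XL False))"
  proof (cases "2 \<le> size l")
    case False
    then have sl: "size l = 0 \<or> size l = 1" by arith
    have rl: "rebuild l X = l" for X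
    proof (cases "l = Leaf")
      case True then show ?thesis by simp
    next
      case False
      then have "size l = 1" using sl size0 by blast
      then show ?thesis using single_props(1) fa(1) by blast
    qed
    have gl: "gap l = 0"
    proof (cases "l = Leaf")
      case True then show ?thesis by (simp add: gap_def)
    next
      case False
      then have "size l = 1" using sl size0 by blast
      then show ?thesis using single_props(2) fa(1) by blast
    qed
    have "DL True l \<noteq> DL False l" unfolding DL_def using sl size0[of l] by auto
    then show ?thesis using rl gl False by (intro exI[of _ "\<lambda>_. {}"]) simp
  next
    case True
    obtain X0 X1 where K: "gap (rebuild l X0) = 0" "gap (rebuild l X1) = 0"
      "\<not> Dw (inorder (rebuild l X0))" "Dw (inorder (rebuild l X1))"
      "Ew (inorder (rebuild l X0)) \<noteq> Ew (inorder (rebuild l X1))"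
      "\<And>X. gap (rebuild l X) = 0 \<Longrightarrow> rebuild l X = rebuild l X0 \<or> rebuild l X = rebuild l X1"
      using Node.IH(1)[OF fa(1) True] by blast
    define XL where "XL = (\<lambda>m. if Ew (inorder (rebuild l X0)) \<noteq> m then X0 else X1)"
    have p1: "\<forall>m. gap (rebuild l (XL m)) = 0" unfolding XL_def using K by simp
    have p2: "\<forall>m. \<not> (2 \<le> size l \<and> Ew (inorder (rebuild l (XL m))) = m)"
      unfolding XL_def using K(5) by auto
    have p3: "\<forall>m X. gap (rebuild l X) = 0 \<and> \<not> (2 \<le> size l \<and> Ew (inorder (rebuild l X)) = m) \<longrightarrow> rebuild l X = rebuild l (XL m)"
    proof (intro allI impI)
      fix m X assume a: "gap (rebuild l X) = 0 \<and> \<not> (2 \<le> size l \<and> Ew (inorder (rebuild l X)) = m)"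
      then have e: "Ew (inorder (rebuild l X)) \<noteq> m" using True by blast
      from K(6) a have "rebuild l X = rebuild l X0 \<or> rebuild l X = rebuild l X1" by blast
      then show "rebuild l X = rebuild l (XL m)" unfolding XL_def using e K(5) by auto
    qed
    have ne: "l \<noteq> Leaf" "size l \<noteq> 1" using True by auto
    have p4: "DL True (rebuild l (XL True)) \<noteq> DL False (rebuild l (XL False))"
      unfolding DL_def XL_def using ne K(3,4,5) by auto
    show ?thesis by (rule exI[of _ XL], intro conjI, fact p1, fact p2, fact p3, fact p4)
  qed
  then obtain XL :: "bool \<Rightarrow> nat set" where KLall: "(\<forall>m. gap (rebuild l (XL m)) = 0) \<and>
      (\<forall>m. \<not> (2 \<le> size l \<and> Ew (inorder (rebuild l (XL m))) = m)) \<and>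
      (\<forall>m X. gap (rebuild l X) = 0 \<and> \<not> (2 \<le> size l \<and> Ew (inorder (rebuild l X)) = m) \<longrightarrow> rebuild l X = rebuild l (XL m)) \<and>
      DL True (rebuild l (XL True)) \<noteq> DL False (rebuild l (XL False))" by (elim exE)
  have KL1: "\<And>m. gap (rebuild l (XL m)) = 0" using KLall by blast
  have KL2: "\<And>m. \<not> (2 \<le> size l \<and> Ew (inorder (rebuild l (XL m))) = m)" using KLall by blast
  have KL3: "\<And>m X. gap (rebuild l X) = 0 \<Longrightarrow> \<not> (2 \<le> size l \<and> Ew (inorder (rebuild l X)) = m) \<Longrightarrow> rebuild l X = rebuild l (XL m)" using KLall by blast
  have KL4: "DL True (rebuild l (XL True)) \<noteq> DL False (rebuild l (XL False))" using KLall by blast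
  have "\<exists>XR :: bool \<Rightarrow> nat set. (\<forall>m. gap (rebuild r (XR m)) = 0) \<and>
      (\<forall>m. \<not> (2 \<le> size r \<and> Dw (inorder (rebuild r (XR m))) = m)) \<and>
      (\<forall>m X. gap (rebuild r X) = 0 \<and> \<not> (2 \<le> size r \<and> Dw (inorder (rebuild r X)) = m) \<longrightarrow> rebuild r X = rebuild r (XR m)) \<and>
      ER True (rebuild r (XR True)) \<noteq> ER False (rebuild r (XR False))"
  proof (cases "2 \<le> size r")
    case False
    have "size r \<noteq> 0" using rne size0 by blast
    then have sr: "size r = 1" using False by arith
    have rl: "rebuild r X = r" for X using single_props(1) fa(2) sr by blast
    have gl: "gap r = 0" using single_props(2) fa(2) sr by blast
    have "ER True r \<noteq> ER False r" unfolding ER_def using sr by simp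
    then show ?thesis using rl gl False by (intro exI[of _ "\<lambda>_. {}"]) simp
  next
    case True
    obtain X0 X1 where K: "gap (rebuild r X0) = 0" "gap (rebuild r X1) = 0"
      "\<not> Dw (inorder (rebuild r X0))" "Dw (inorder (rebuild r X1))"
      "Ew (inorder (rebuild r X0)) \<noteq> Ew (inorder (rebuild r X1))"
      "\<And>X. gap (rebuild r X) = 0 \<Longrightarrow> rebuild r X = rebuild r X0 \<or> rebuild r X = rebuild r X1"
      using Node.IH(2)[OF fa(2) True] by blast
    define XR where "XR = (\<lambda>m. if m then X0 else X1)"
    have p1: "\<forall>m. gap (rebuild r (XR m)) = 0" unfolding XR_def using K by simp
    have p2: "\<forall>m. \<not> (2 \<le> size r \<and> Dw (inorder (rebuild r (XR m))) = m)"
      unfolding XR_def using K(3,4) by auto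
    have p3: "\<forall>m X. gap (rebuild r X) = 0 \<and> \<not> (2 \<le> size r \<and> Dw (inorder (rebuild r X)) = m) \<longrightarrow> rebuild r X = rebuild r (XR m)"
    proof (intro allI impI)
      fix m X assume a: "gap (rebuild r X) = 0 \<and> \<not> (2 \<le> size r \<and> Dw (inorder (rebuild r X)) = m)"
      then have e: "Dw (inorder (rebuild r X)) \<noteq> m" using True by blast
      from K(6) a have "rebuild r X = rebuild r X0 \<or> rebuild r X = rebuild r X1" by blast
      then show "rebuild r X = rebuild r (XR m)" unfolding XR_def using e K(3,4) by auto
    qed
    have ne: "size r \<noteq> 1" using True by auto
    have p4: "ER True (rebuild r (XR True)) \<noteq> ER False (rebuild r (XR False))"
      unfolding ER_def XR_def using ne K(5) by auto
    show ?thesis by (rule exI[of _ XR], intro conjI, fact p1, fact p2, fact p3, fact p4)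
  qed
  then obtain XR :: "bool \<Rightarrow> nat set" where KRall: "(\<forall>m. gap (rebuild r (XR m)) = 0) \<and>
      (\<forall>m. \<not> (2 \<le> size r \<and> Dw (inorder (rebuild r (XR m))) = m)) \<and>
      (\<forall>m X. gap (rebuild r X) = 0 \<and> \<not> (2 \<le> size r \<and> Dw (inorder (rebuild r X)) = m) \<longrightarrow> rebuild r X = rebuild r (XR m)) \<and>
      ER True (rebuild r (XR True)) \<noteq> ER False (rebuild r (XR False))" by (elim exE)
  have KR1: "\<And>m. gap (rebuild r (XR m)) = 0" using KRall by blast
  have KR2: "\<And>m. \<not> (2 \<le> size r \<and> Dw (inorder (rebuild r (XR m))) = m)" using KRall by blast
  have KR3: "\<And>m X. gap (rebuild r X) = 0 \<Longrightarrow> \<not> (2 \<le> size r \<and> Dw (inorder (rebuild r X)) = m) \<Longrightarrow> rebuild r X = rebuild r (XR m)" using KRall by blast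
  have KR4: "ER True (rebuild r (XR True)) \<noteq> ER False (rebuild r (XR False))" using KRall by blast
  define mT where "mT = (a = Min (set_tree (Node l a r)))"
  define Xm where "Xm = (\<lambda>m. {i. i < size l \<and> i \<in> XL m} \<union> (if mT \<noteq> m then {size l} else {}) \<union>
                             {i. Suc (size l) \<le> i \<and> i - Suc (size l) \<in> XR m})"
  have f1: "rebuild l (Xm m) = rebuild l (XL m)" for m
    by (rule rebuild_cong) (auto simp: Xm_def)
  have f2: "{i. Suc (size l) + i \<in> Xm m} = XR m" for m
    unfolding Xm_def by auto
  have f3: "(size l \<in> Xm m) = (mT \<noteq> m)" for m
    unfolding Xm_def by auto
  have S_m: "gap (rebuild (Node l a r) (Xm m)) = 0 \<and> Dw (inorder (rebuild (Node l a r) (Xm m))) = DL m (rebuild l (XL m))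
       \<and> Ew (inorder (rebuild (Node l a r) (Xm m))) = ER m (rebuild r (XR m))" for m
  proof -
    have mm: "(mT \<noteq> (size l \<in> Xm m)) = m" using f3[of m] by (cases mT; cases m) simp_all
    note St = STEP[OF Node.prems(1) rne, of "Xm m", folded mT_def, unfolded f1 f2 mm]
    show ?thesis using St KL1 KR1 KL2[of m] KR2[of m] unfolding DL_def ER_def by simp
  qed
  define m0 where "m0 = (\<not> DL True (rebuild l (XL True)))"
  have d0: "\<not> Dw (inorder (rebuild (Node l a r) (Xm m0)))"
    using S_m[of m0] KL4 unfolding m0_def by (cases "DL True (rebuild l (XL True))") auto
  have d1: "Dw (inorder (rebuild (Node l a r) (Xm (\<not> m0))))"
    using S_m[of "\<not> m0"] KL4 unfolding m0_def by (cases "DL True (rebuild l (XL True))") auto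
  have e01: "Ew (inorder (rebuild (Node l a r) (Xm m0))) \<noteq> Ew (inorder (rebuild (Node l a r) (Xm (\<not> m0))))"
    using S_m[of m0] S_m[of "\<not> m0"] KR4 by (cases m0) auto
  have uniq: "rebuild (Node l a r) X = rebuild (Node l a r) (Xm m0) \<or> rebuild (Node l a r) X = rebuild (Node l a r) (Xm (\<not> m0))"
    if g: "gap (rebuild (Node l a r) X) = 0" for X
  proof -
    define m where "m = (mT \<noteq> (size l \<in> X))"
    define Xr where "Xr = {i. Suc (size l) + i \<in> X}"
    note St = STEP[OF Node.prems(1) rne, of X, folded mT_def m_def Xr_def]
    have hl: "hrd (rebuild l X)" using rebuild_props[OF fa(1)] by blast
    have hr: "hrd (rebuild r Xr)" using rebuild_props[OF fa(2)] by blast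
    have g1: "0 \<le> gap (rebuild l X)" "0 \<le> gap (rebuild r Xr)" using gap_nonneg hl hr by auto
    have z: "gap (rebuild l X) = 0" "gap (rebuild r Xr) = 0"
      "\<not> (2 \<le> size l \<and> Ew (inorder (rebuild l X)) = m)" "\<not> (2 \<le> size r \<and> Dw (inorder (rebuild r Xr)) = m)"
      using St(1) g g1 by (auto split: if_splits)
    have el: "rebuild l X = rebuild l (XL m)" using KL3[OF z(1) z(3)] .
    have er: "rebuild r Xr = rebuild r (XR m)" using KR3[OF z(2) z(4)] .
    have es: "(size l \<in> X) = (size l \<in> Xm m)" unfolding f3 m_def by (cases mT; cases "size l \<in> X") simp_all
    have "rebuild (Node l a r) X = rebuild (Node l a r) (Xm m)"
      using el er es f1[of m] f2[of m] unfolding Xr_def by simp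
    then show ?thesis by (cases "m = m0") auto
  qed
  show ?case
    apply (rule exI[of _ "Xm m0"], rule exI[of _ "Xm (\<not> m0)"])
    using S_m[of m0] S_m[of "\<not> m0"] d0 d1 e01 uniq by blast
qed

lemma turns0: "w \<noteq> [] \<Longrightarrow> distinct w \<Longrightarrow> 0 \<notin> set w \<Longrightarrow> turns (0 # w) = turns w + (if Dw w then 1 else 0)"
proof (cases w)
  case Nil then show ?thesis by (simp add: Dw_def)
next
  case (Cons a v)
  assume a: "w \<noteq> []" "distinct w" "0 \<notin> set w"
  show ?thesis
  proof (cases v)
    case Nil then show ?thesis using Cons by (simp add: Dw_def)
  next
    case (Cons b r)
    have "0 < a" "a \<noteq> b" using a \<open>w = a # v\<close> Cons by auto
    then show ?thesis using \<open>w = a # v\<close> Cons by (auto simp: Dw_def)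
  qed
qed

lemma as_gap:
  assumes h: "hrd S" and st: "set_tree S = {1..n}" and ne: "S \<noteq> Leaf"
  shows "int (as_len (inorder S)) = gap S + int (nleaf S) + (if Dw (inorder S) then 1 else 0)"
proof -
  have d: "distinct (inorder S)" using h unfolding hrd_def by simp
  have w: "inorder S \<noteq> []" using ne inorder_Nil_iff by blast
  have z: "0 \<notin> set (inorder S)" using st by simp
  have "as_len (inorder S) = turns (0 # inorder S) + 1" using as_len_turns[OF d w z] .
  then show ?thesis using turns0[OF w d z] ne unfolding gap_def by simp
qed

theorem mainTheorem2:
  fixes n :: nat and \<pi> :: "nat list" and T :: "nat tree"
  assumes "n \<ge> 1"
    and "is_perm n \<pi>"
    and "hr_tree n T" and "inorder T = \<pi>"
  shows "(\<forall>S \<in> orb T. as_len (inorder S) \<ge> nleaf T)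
       \<and> (\<exists>!S. S \<in> orb T \<and> as_len (inorder S) = nleaf T)"
proof -
  have hT: "hrd T" using assms(3) unfolding hr_tree_def hrd_def by simp
  have stT: "set_tree T = {1..n}" using assms(3) unfolding hr_tree_def by simp
  have Tne: "T \<noteq> Leaf" using stT assms(1) by auto
  have props: "hrd (rebuild T X) \<and> set_tree (rebuild T X) = {1..n} \<and> rebuild T X \<noteq> Leaf \<and> nleaf (rebuild T X) = nleaf T" for X
  proof -
    have p: "hrd (rebuild T X)" "set_tree (rebuild T X) = set_tree T" "size (rebuild T X) = size T"
      "nleaf (rebuild T X) = nleaf T" using rebuild_props[OF hT] by auto
    have "rebuild T X \<noteq> Leaf" using p(3) Tne size0 by metis
    then show ?thesis using p stT by simp
  qed
  have key: "int (as_len (inorder (rebuild T X))) = gap (rebuild T X) + int (nleaf T) + (if Dw (inorder (rebuild T X)) then 1 else 0)" for X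
    using as_gap[of "rebuild T X" n] props[of X] by simp
  have gnn: "0 \<le> gap (rebuild T X)" for X using gap_nonneg props by blast
  have eqv: "(as_len (inorder (rebuild T X)) = nleaf T) = (gap (rebuild T X) = 0 \<and> \<not> Dw (inorder (rebuild T X)))" for X
    using key[of X] gnn[of X] by (auto split: if_splits)
  have orbE: "\<exists>X. S = rebuild T X" if "S \<in> orb T" for S using orb_rebuild[OF that hT] .
  have part1: "\<forall>S \<in> orb T. as_len (inorder S) \<ge> nleaf T"
  proof
    fix S assume "S \<in> orb T"
    then obtain X where X: "S = rebuild T X" using orbE by blast
    show "as_len (inorder S) \<ge> nleaf T" using key[of X] gnn[of X] unfolding X by (auto split: if_splits)
  qed
  have part2: "\<exists>!S. S \<in> orb T \<and> as_len (inorder S) = nleaf T"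
  proof (cases "2 \<le> size T")
    case False
    have "size T \<noteq> 0" using Tne size0 by blast
    then have s1: "size T = 1" using False by arith
    have rT: "rebuild T X = T" for X using single_props(1)[OF hT s1] .
    have good: "as_len (inorder T) = nleaf T"
      using eqv[of "{}"] single_props(2,3)[OF hT s1] rT by simp
    show ?thesis
    proof (rule ex1I[of _ T])
      show "T \<in> orb T \<and> as_len (inorder T) = nleaf T" using good orb.orb_refl by blast
      fix S assume "S \<in> orb T \<and> as_len (inorder S) = nleaf T"
      then obtain X where "S = rebuild T X" using orbE by blast
      then show "S = T" using rT by simp
    qed
  next
    case True
    obtain X0 X1 where K0: "gap (rebuild T X0) = 0" "gap (rebuild T X1) = 0"
      "\<not> Dw (inorder (rebuild T X0))" "Dw (inorder (rebuild T X1))"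
      "\<And>X. gap (rebuild T X) = 0 \<Longrightarrow> rebuild T X = rebuild T X0 \<or> rebuild T X = rebuild T X1"
      using K[OF hT True] by blast
    show ?thesis
    proof (rule ex1I[of _ "rebuild T X0"])
      show "rebuild T X0 \<in> orb T \<and> as_len (inorder (rebuild T X0)) = nleaf T"
        using rebuild_orb eqv[of X0] K0(1,3) by blast
      fix S assume a: "S \<in> orb T \<and> as_len (inorder S) = nleaf T"
      then obtain X where X: "S = rebuild T X" using orbE by blast
      have "gap (rebuild T X) = 0" "\<not> Dw (inorder (rebuild T X))" using a eqv[of X] unfolding X by auto
      then show "S = rebuild T X0" using K0(4) K0(5)[of X] unfolding X by auto
    qed
  qed
  show ?thesis using part1 part2 by blast
qed


end
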